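(* Let $m$ be a positive integer and let $\pm\theta_1,\pm\theta_2,\pm\theta_3$ be the roots of $q(x)=x^6-(m+5)x^4+(3m+5)x^2-1$ in its splitting field over $\mathbb{Q}$. In the double subdivided star $T_{2,m}$, let $c,d$ be the two pendant vertices of the subdivided star $SK_{1,2}$ part and $e,f$ their respective neighbours (the two degree-$2$ vertices adjacent to the coalescence vertex of $SK_{1,2}$). Then: (1) If $q(x)$ is irreducible over $\mathbb{Q}$, then $T_{2,m}$ has pretty good state transfer between $c$ and $d$ and between $e$ and $f$, with respect to a sequence in $(2\mathbb{Z}+1)\pi$. (2) Suppose $q(x)$ is reducible over $\mathbb{Q}$. If $\theta_1+\theta_2+\theta_3$ is an even integer, then $T_{2,m}$ has pretty good state transfer between $c$ and $d$ and between $e$ and $f$, with respect to a sequence in $(2\mathbb{Z}+1)\pi$. If $\theta_1+\theta_2+\theta_3$ is an odd integer, then there is no pretty good state transfer from any of the vertices $c,d,e,f$.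
   Context: A subdivided star $SK_{1,l}$ is obtained by identifying exactly one pendant (end) vertex from each of $l$ copies of the path $P_3$; the identified vertex is the coalescence vertex. The double subdivided star $T_{l,m}$ is obtained from $SK_{1,l}$ and $SK_{1,m}$ by adding one edge joining their two coalescence vertices. For a graph with adjacency matrix $A$, $U(t)=\exp(itA)$, $t\in\mathbb{R}$, and $\mathbf{e}_a$ is the standard basis vector of vertex $a$. Pretty good state transfer between distinct vertices $a,b$ means there exist real $\tau_k$ and $\gamma\in\mathbb{C}$ with $\lim_{k\to\infty}U(\tau_k)\mathbf{e}_a=\gamma\mathbf{e}_b$; "with respect to a sequence in $S$" means such $\tau_k$ can be chosen in $S$. When $q$ is reducible, it factors as $-f(x)f(-x)$ with $f$ an irreducible monic cubic, and $\theta_1,\theta_2,\theta_3$ denote the roots of $f$ (so $\theta_1+\theta_2+\theta_3$ is an integer). *)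

theory Defs
  imports Complex_Main "HOL-Computational_Algebra.Computational_Algebra"
begin

fun mat_pow :: "nat \<Rightarrow> (nat \<Rightarrow> nat \<Rightarrow> complex) \<Rightarrow> nat \<Rightarrow> nat \<Rightarrow> nat \<Rightarrow> complex" where
  "mat_pow n A 0 = (\<lambda>i j. if i = j then 1 else 0)"
| "mat_pow n A (Suc k) = (\<lambda>i j. \<Sum>l<n. mat_pow n A k i l * A l j)"

definition adj_mat :: "(nat \<Rightarrow> nat \<Rightarrow> bool) \<Rightarrow> nat \<Rightarrow> nat \<Rightarrow> complex" where
  "adj_mat E = (\<lambda>i j. if E i j then 1 else 0)"

(* U(t) = exp(i t A) = sum_k (i t)^k A^k / k!, entry (x,y) *)
definition transfer :: "nat \<Rightarrow> (nat \<Rightarrow> nat \<Rightarrow> bool) \<Rightarrow> real \<Rightarrow> nat \<Rightarrow> nat \<Rightarrow> complex" where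
  "transfer n E t x y = (\<Sum>k. ((\<i> * complex_of_real t) ^ k / of_nat (fact k)) * mat_pow n (adj_mat E) k x y)"

(* pretty good state transfer from a to b, with times taken from S:
   U(tau_k) e_a \<longrightarrow> gamma e_b, componentwise over the vertex set {0..<n} *)
definition pgst_wrt :: "nat \<Rightarrow> (nat \<Rightarrow> nat \<Rightarrow> bool) \<Rightarrow> real set \<Rightarrow> nat \<Rightarrow> nat \<Rightarrow> bool" where
  "pgst_wrt n E S a b \<longleftrightarrow> a \<noteq> b \<and> a < n \<and> b < n \<and>
     (\<exists>(\<tau>::nat \<Rightarrow> real) (\<gamma>::complex). (\<forall>k. \<tau> k \<in> S) \<and>
        (\<forall>x<n. (\<lambda>k. transfer n E (\<tau> k) x a) \<longlonglongrightarrow> (if x = b then \<gamma> else 0)))"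

definition pgst :: "nat \<Rightarrow> (nat \<Rightarrow> nat \<Rightarrow> bool) \<Rightarrow> nat \<Rightarrow> nat \<Rightarrow> bool" where
  "pgst n E a b \<longleftrightarrow> pgst_wrt n E UNIV a b"

definition odd_pi_multiples :: "real set" where
  "odd_pi_multiples = {real_of_int (2 * j + 1) * pi | j. True}"

(* Double subdivided star T_{2,m}, vertices {0..<2m+6}:
   0 = coalescence vertex of SK_{1,2}; 1 = e, 2 = f (its neighbours of degree 2);
   3 = c (pendant, adjacent to e), 4 = d (pendant, adjacent to f);
   5 = coalescence vertex of SK_{1,m} (adjacent to 0);
   6+i (i<m) = neighbours of vertex 5; 6+m+i = pendant vertex adjacent to 6+i. *)
definition T2_edge0 :: "nat \<Rightarrow> nat \<Rightarrow> nat \<Rightarrow> bool" where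
  "T2_edge0 m x y \<longleftrightarrow> (x = 0 \<and> y = 1) \<or> (x = 0 \<and> y = 2) \<or> (x = 1 \<and> y = 3) \<or> (x = 2 \<and> y = 4)
     \<or> (x = 0 \<and> y = 5) \<or> (\<exists>i<m. (x = 5 \<and> y = 6 + i) \<or> (x = 6 + i \<and> y = 6 + m + i))"

definition T2_edge :: "nat \<Rightarrow> nat \<Rightarrow> nat \<Rightarrow> bool" where
  "T2_edge m x y \<longleftrightarrow> T2_edge0 m x y \<or> T2_edge0 m y x"

definition T2_size :: "nat \<Rightarrow> nat" where
  "T2_size m = 2 * m + 6"

definition vc :: nat where "vc = 3"
definition vd :: nat where "vd = 4"
definition ve :: nat where "ve = 1"
definition vf :: nat where "vf = 2"

definition q_poly :: "nat \<Rightarrow> rat poly" where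
  "q_poly m = [:-1, 0, of_nat (3*m+5), 0, - of_nat (m+5), 0, 1:]"

end

theory Submission
  imports Defs "HOL-Analysis.Kronecker_Approximation_Theorem" "HOL-Computational_Algebra.Field_as_Ring"
begin

lemma T2_edge_sym: "T2_edge m x y = T2_edge m y x"
  unfolding T2_edge_def by auto

lemma T2_edge0_alt: "T2_edge0 m x y \<longleftrightarrow> (x = 0 \<and> y = 1) \<or> (x = 0 \<and> y = 2) \<or> (x = 1 \<and> y = 3) \<or> (x = 2 \<and> y = 4)
     \<or> (x = 0 \<and> y = 5) \<or> (x = 5 \<and> 6 \<le> y \<and> y < 6 + m) \<or> (6 \<le> x \<and> x < 6 + m \<and> y = x + m)"
proof -
  have "(\<exists>i<m. (x = 5 \<and> y = 6 + i) \<or> (x = 6 + i \<and> y = 6 + m + i)) \<longleftrightarrow>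
        (x = 5 \<and> 6 \<le> y \<and> y < 6 + m) \<or> (6 \<le> x \<and> x < 6 + m \<and> y = x + m)"
  proof
    assume "\<exists>i<m. (x = 5 \<and> y = 6 + i) \<or> (x = 6 + i \<and> y = 6 + m + i)"
    then obtain i where "i < m" "(x = 5 \<and> y = 6 + i) \<or> (x = 6 + i \<and> y = 6 + m + i)" by blast
    then show "(x = 5 \<and> 6 \<le> y \<and> y < 6 + m) \<or> (6 \<le> x \<and> x < 6 + m \<and> y = x + m)" by linarith
  next
    assume H: "(x = 5 \<and> 6 \<le> y \<and> y < 6 + m) \<or> (6 \<le> x \<and> x < 6 + m \<and> y = x + m)"
    show "\<exists>i<m. (x = 5 \<and> y = 6 + i) \<or> (x = 6 + i \<and> y = 6 + m + i)"
    proof (cases "x = 5 \<and> 6 \<le> y \<and> y < 6 + m")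
      case True then show ?thesis by (intro exI[of _ "y - 6"]) auto
    next
      case False then show ?thesis using H by (intro exI[of _ "x - 6"]) auto
    qed
  qed
  then show ?thesis unfolding T2_edge0_def by simp
qed


lemma T2_edge_iff: "T2_edge m l y \<longleftrightarrow> T2_edge0 m l y \<or> T2_edge0 m y l"
  unfolding T2_edge_def ..

lemma nb0: "T2_edge m l 0 \<longleftrightarrow> l = 1 \<or> l = 2 \<or> l = 5"
  unfolding T2_edge_iff T2_edge0_alt by auto
lemma nb1: "T2_edge m l 1 \<longleftrightarrow> l = 0 \<or> l = 3"
  unfolding T2_edge_iff T2_edge0_alt by auto
lemma nb2: "T2_edge m l 2 \<longleftrightarrow> l = 0 \<or> l = 4"
  unfolding T2_edge_iff T2_edge0_alt by auto
lemma nb3: "T2_edge m l 3 \<longleftrightarrow> l = 1"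
  unfolding T2_edge_iff T2_edge0_alt by auto
lemma nb4: "T2_edge m l 4 \<longleftrightarrow> l = 2"
  unfolding T2_edge_iff T2_edge0_alt by auto
lemma nb5: "T2_edge m l 5 \<longleftrightarrow> l = 0 \<or> (6 \<le> l \<and> l < 6 + m)"
  unfolding T2_edge_iff T2_edge0_alt by auto
lemma nb6: "6 \<le> y \<Longrightarrow> y < 6 + m \<Longrightarrow> T2_edge m l y \<longleftrightarrow> l = 5 \<or> l = y + m"
  unfolding T2_edge_iff T2_edge0_alt by auto
lemma nb7: "6 + m \<le> y \<Longrightarrow> T2_edge m l y \<longleftrightarrow> l = y - m \<and> y < 6 + 2*m"
  unfolding T2_edge_iff T2_edge0_alt by auto


lemma sum_adj: "(\<Sum>l<N. adj_mat E l y * g l) = sum g {l. l < N \<and> E l y}"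
proof -
  have "(\<Sum>l<N. adj_mat E l y * g l) = (\<Sum>l\<in>{..<N}. if E l y then g l else 0)"
    by (rule sum.cong) (auto simp: adj_mat_def)
  also have "\<dots> = sum g {l \<in> {..<N}. E l y}"
    by (rule sum.inter_filter[symmetric]) auto
  finally show ?thesis by simp
qed

definition nbsum :: "nat \<Rightarrow> (nat \<Rightarrow> 'a::comm_monoid_add) \<Rightarrow> nat \<Rightarrow> 'a" where
  "nbsum m g y = (if y = 0 then g 1 + g 2 + g 5 else if y = 1 then g 0 + g 3 else if y = 2 then g 0 + g 4
     else if y = 3 then g 1 else if y = 4 then g 2 else if y = 5 then g 0 + (\<Sum>i<m. g (6+i))
     else if y < 6 + m then g 5 + g (y + m) else g (y - m))"

lemma nbsum_eq:
  fixes g :: "nat \<Rightarrow> complex"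
  assumes y: "y < T2_size m"
  shows "(\<Sum>l<T2_size m. adj_mat (T2_edge m) l y * g l) = nbsum m g y"
proof -
  let ?S = "{l. l < T2_size m \<and> T2_edge m l y}"
  have "y = 0 \<or> y = 1 \<or> y = 2 \<or> y = 3 \<or> y = 4 \<or> y = 5 \<or> (6 \<le> y \<and> y < 6 + m) \<or> (6 + m \<le> y)" by linarith
  moreover
  { assume "y = 0" then have "?S = {1,2,5}" unfolding \<open>y = 0\<close> nb0 by (auto simp: T2_size_def)
    then have ?thesis using \<open>y = 0\<close> by (simp add: sum_adj nbsum_def) }
  moreover
  { assume "y = 1" then have "?S = {0,3}" unfolding \<open>y = 1\<close> nb1 by (auto simp: T2_size_def)
    then have ?thesis using \<open>y = 1\<close> by (simp add: sum_adj nbsum_def) }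
  moreover
  { assume "y = 2" then have "?S = {0,4}" unfolding \<open>y = 2\<close> nb2 by (auto simp: T2_size_def)
    then have ?thesis using \<open>y = 2\<close> by (simp add: sum_adj nbsum_def) }
  moreover
  { assume "y = 3" then have "?S = {1}" unfolding \<open>y = 3\<close> nb3 by (auto simp: T2_size_def)
    then have ?thesis using \<open>y = 3\<close> by (simp add: sum_adj nbsum_def) }
  moreover
  { assume "y = 4" then have "?S = {2}" unfolding \<open>y = 4\<close> nb4 by (auto simp: T2_size_def)
    then have ?thesis using \<open>y = 4\<close> by (simp add: sum_adj nbsum_def) }
  moreover
  { assume "y = 5" have "?S = insert 0 ((\<lambda>i. 6 + i) ` {..<m})"
    proof (rule set_eqI)
      fix x show "x \<in> ?S \<longleftrightarrow> x \<in> insert 0 ((\<lambda>i. 6 + i) ` {..<m})"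
      proof
        assume "x \<in> ?S"
        then have "x = 0 \<or> (6 \<le> x \<and> x < 6 + m)" unfolding \<open>y = 5\<close> nb5 by auto
        moreover have "x \<in> (\<lambda>i. 6 + i) ` {..<m}" if "6 \<le> x \<and> x < 6 + m"
          using that by (intro image_eqI[of _ _ "x - 6"]) auto
        ultimately show "x \<in> insert 0 ((\<lambda>i. 6 + i) ` {..<m})" by blast
      next
        assume "x \<in> insert 0 ((\<lambda>i. 6 + i) ` {..<m})"
        then show "x \<in> ?S" unfolding \<open>y = 5\<close> nb5 by (auto simp: T2_size_def)
      qed
    qed
    moreover have "sum g (insert 0 ((\<lambda>i. 6 + i) ` {..<m})) = g 0 + (\<Sum>i<m. g (6+i))"
      by (subst sum.insert) (auto simp: sum.reindex)
    ultimately have ?thesis using \<open>y = 5\<close> by (simp add: sum_adj nbsum_def) }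
  moreover
  { assume h: "6 \<le> y \<and> y < 6 + m" then have "?S = {5, y + m}" by (auto simp: nb6 T2_size_def)
    then have ?thesis using h by (simp add: sum_adj nbsum_def) }
  moreover
  { assume h: "6 + m \<le> y" then have "?S = {y - m}" using y by (auto simp: nb7 T2_size_def)
    then have ?thesis using h by (simp add: sum_adj nbsum_def) }
  ultimately show ?thesis by blast
qed

lemma sum_delta_mult1:
  fixes f :: "nat \<Rightarrow> 'a::comm_ring_1"
  shows "x < n \<Longrightarrow> (\<Sum>l<n. (if x = l then 1 else 0) * f l) = f x"
proof -
  assume "x < n"
  have "(\<Sum>l<n. (if x = l then 1 else 0) * f l) = (\<Sum>l<n. if x = l then f l else 0)"
    by (rule sum.cong) auto
  then show ?thesis using \<open>x < n\<close> by simp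
qed

lemma sum_delta_mult2:
  fixes f :: "nat \<Rightarrow> 'a::comm_ring_1"
  shows "x < n \<Longrightarrow> (\<Sum>l<n. f l * (if l = x then 1 else 0)) = f x"
proof -
  assume "x < n"
  have "(\<Sum>l<n. f l * (if l = x then 1 else 0)) = (\<Sum>l<n. if l = x then f l else 0)"
    by (rule sum.cong) auto
  then show ?thesis using \<open>x < n\<close> by simp
qed

lemma mat_pow_Suc':
  assumes "i < n" "j < n"
  shows "mat_pow n A (Suc k) i j = (\<Sum>l<n. A i l * mat_pow n A k l j)"
  using assms
proof (induction k arbitrary: i j)
  case 0
  have "mat_pow n A (Suc 0) i j = (\<Sum>l<n. (if i = l then 1 else 0) * A l j)" by simp
  also have "\<dots> = A i j" using 0 by (simp add: sum_delta_mult1)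
  also have "\<dots> = (\<Sum>l<n. A i l * (if l = j then 1 else 0))" using 0 by (simp add: sum_delta_mult2)
  finally show ?case by simp
next
  case (Suc k)
  have "mat_pow n A (Suc (Suc k)) i j = (\<Sum>l<n. mat_pow n A (Suc k) i l * A l j)" by simp
  also have "\<dots> = (\<Sum>l<n. (\<Sum>p<n. A i p * mat_pow n A k p l) * A l j)"
    using Suc by (intro sum.cong) auto
  also have "\<dots> = (\<Sum>p<n. A i p * (\<Sum>l<n. mat_pow n A k p l * A l j))"
    by (simp add: sum_distrib_left sum_distrib_right mult.assoc) (rule sum.swap)
  also have "\<dots> = (\<Sum>p<n. A i p * mat_pow n A (Suc k) p j)" by simp
  finally show ?case .
qed

lemma mat_pow_col_eigen:
  assumes eig: "\<And>x. x < n \<Longrightarrow> (\<Sum>l<n. A x l * z l) = c * z x" and x: "x < n"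
  shows "(\<Sum>l<n. mat_pow n A k x l * z l) = c ^ k * z x"
  using x
proof (induction k arbitrary: x)
  case 0
  then show ?case by (simp add: sum_delta_mult1)
next
  case (Suc k)
  have "(\<Sum>l<n. mat_pow n A (Suc k) x l * z l) = (\<Sum>l<n. (\<Sum>p<n. A x p * mat_pow n A k p l) * z l)"
    using Suc.prems by (intro sum.cong refl, subst mat_pow_Suc') auto
  also have "\<dots> = (\<Sum>p<n. A x p * (\<Sum>l<n. mat_pow n A k p l * z l))"
    by (simp add: sum_distrib_left sum_distrib_right mult.assoc) (rule sum.swap)
  also have "\<dots> = (\<Sum>p<n. A x p * (c ^ k * z p))"
    using Suc.IH by (intro sum.cong) auto
  also have "\<dots> = c ^ k * (\<Sum>p<n. A x p * z p)"
    by (simp add: sum_distrib_left mult.left_commute)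
  also have "\<dots> = c ^ Suc k * z x" using eig[OF Suc.prems] by simp
  finally show ?case .
qed

lemma mat_pow_row_eigen:
  assumes eig: "\<And>y. y < n \<Longrightarrow> (\<Sum>l<n. v l * A l y) = c * v y" and y: "y < n"
  shows "(\<Sum>l<n. v l * mat_pow n A k l y) = c ^ k * v y"
  using y
proof (induction k arbitrary: y)
  case 0
  then show ?case by (simp add: sum_delta_mult2)
next
  case (Suc k)
  have "(\<Sum>l<n. v l * mat_pow n A (Suc k) l y) = (\<Sum>l<n. v l * (\<Sum>p<n. mat_pow n A k l p * A p y))"
    by simp
  also have "\<dots> = (\<Sum>p<n. (\<Sum>l<n. v l * mat_pow n A k l p) * A p y)"
    by (simp add: sum_distrib_left sum_distrib_right mult.assoc) (rule sum.swap)
  also have "\<dots> = (\<Sum>p<n. (c ^ k * v p) * A p y)"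
    using Suc.IH by (intro sum.cong) auto
  also have "\<dots> = c ^ k * (\<Sum>p<n. v p * A p y)"
    by (simp add: sum_distrib_left mult.assoc)
  also have "\<dots> = c ^ Suc k * v y" using eig[OF Suc.prems] by simp
  finally show ?case .
qed

lemma mat_pow_bound:
  fixes A :: "nat \<Rightarrow> nat \<Rightarrow> complex"
  assumes "\<And>i j. norm (A i j) \<le> 1"
  shows "norm (mat_pow n A k i j) \<le> real n ^ k"
proof (induction k arbitrary: i j)
  case 0 then show ?case by simp
next
  case (Suc k)
  have "norm (mat_pow n A (Suc k) i j) \<le> (\<Sum>l<n. norm (mat_pow n A k i l * A l j))"
    by (simp add: norm_sum)
  also have "\<dots> \<le> (\<Sum>l<n. real n ^ k * 1)"
    by (intro sum_mono, simp only: norm_mult, rule mult_mono[OF Suc assms]) auto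
  finally show ?case by simp
qed

lemma exp_sums_c:
  "(\<lambda>k. (\<i> * complex_of_real t) ^ k / of_nat (fact k) * c ^ k) sums exp (\<i> * complex_of_real t * c)"
proof -
  have "(\<lambda>k. (\<i> * complex_of_real t * c) ^ k /\<^sub>R fact k) sums exp (\<i> * complex_of_real t * c)"
    by (rule exp_converges)
  moreover have "(\<i> * complex_of_real t * c) ^ k /\<^sub>R fact k = (\<i> * complex_of_real t) ^ k / of_nat (fact k) * c ^ k" for k
    by (simp add: scaleR_conv_of_real power_mult_distrib field_simps)
  ultimately show ?thesis by simp
qed

lemma adj_bound: "norm (adj_mat E i j) \<le> 1"
  by (simp add: adj_mat_def)

lemma transfer_summable:
  "summable (\<lambda>k. ((\<i> * complex_of_real t) ^ k / of_nat (fact k)) * mat_pow n (adj_mat E) k x y)"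
proof (rule summable_comparison_test)
  show "\<exists>N. \<forall>k\<ge>N. norm ((\<i> * complex_of_real t) ^ k / of_nat (fact k) * mat_pow n (adj_mat E) k x y)
          \<le> (\<bar>t\<bar> * real n) ^ k /\<^sub>R fact k"
  proof (intro exI allI impI)
    fix k :: nat
    have "norm ((\<i> * complex_of_real t) ^ k / of_nat (fact k) * mat_pow n (adj_mat E) k x y)
        = \<bar>t\<bar> ^ k / fact k * norm (mat_pow n (adj_mat E) k x y)"
      by (simp add: norm_mult norm_divide norm_power)
    also have "\<dots> \<le> \<bar>t\<bar> ^ k / fact k * real n ^ k"
      by (intro mult_left_mono mat_pow_bound adj_bound) auto
    also have "\<dots> = (\<bar>t\<bar> * real n) ^ k /\<^sub>R fact k"
      by (simp add: power_mult_distrib field_simps)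
    finally show "norm ((\<i> * complex_of_real t) ^ k / of_nat (fact k) * mat_pow n (adj_mat E) k x y)
          \<le> (\<bar>t\<bar> * real n) ^ k /\<^sub>R fact k" .
  qed
  show "summable (\<lambda>k. (\<bar>t\<bar> * real n) ^ k /\<^sub>R fact k)"
    using exp_converges sums_summable by blast
qed


lemma transfer_col:
  fixes z :: "'j \<Rightarrow> nat \<Rightarrow> complex" and lam :: "'j \<Rightarrow> complex"
  assumes fin: "finite J" and a: "a < n" and x: "x < n"
    and eig: "\<And>j y. j \<in> J \<Longrightarrow> y < n \<Longrightarrow> (\<Sum>l<n. adj_mat E y l * z j l) = lam j * z j y"
    and dec: "\<And>y. y < n \<Longrightarrow> (if y = a then 1 else 0) = (\<Sum>j\<in>J. z j y)"
  shows "transfer n E t x a = (\<Sum>j\<in>J. exp (\<i> * complex_of_real t * lam j) * z j x)"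
proof -
  have mp: "mat_pow n (adj_mat E) k x a = (\<Sum>j\<in>J. lam j ^ k * z j x)" for k
  proof -
    have "mat_pow n (adj_mat E) k x a = (\<Sum>l<n. mat_pow n (adj_mat E) k x l * (if l = a then 1 else 0))"
      by (simp add: sum_delta_mult2 a)
    also have "\<dots> = (\<Sum>l<n. mat_pow n (adj_mat E) k x l * (\<Sum>j\<in>J. z j l))"
      using dec by (intro sum.cong) auto
    also have "\<dots> = (\<Sum>j\<in>J. \<Sum>l<n. mat_pow n (adj_mat E) k x l * z j l)"
      by (simp add: sum_distrib_left) (rule sum.swap)
    also have "\<dots> = (\<Sum>j\<in>J. lam j ^ k * z j x)"
      using mat_pow_col_eigen[OF eig x] by (intro sum.cong) auto
    finally show ?thesis .
  qed
  have eq: "((\<i> * complex_of_real t) ^ k / of_nat (fact k)) * mat_pow n (adj_mat E) k x a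
     = (\<Sum>j\<in>J. ((\<i> * complex_of_real t) ^ k / of_nat (fact k) * lam j ^ k) * z j x)" for k
    unfolding mp by (simp add: sum_distrib_left mult.assoc)
  have "(\<lambda>k. \<Sum>j\<in>J. ((\<i> * complex_of_real t) ^ k / of_nat (fact k) * lam j ^ k) * z j x)
          sums (\<Sum>j\<in>J. exp (\<i> * complex_of_real t * lam j) * z j x)"
    by (intro sums_sum sums_mult2 exp_sums_c)
  then have "(\<lambda>k. ((\<i> * complex_of_real t) ^ k / of_nat (fact k)) * mat_pow n (adj_mat E) k x a)
          sums (\<Sum>j\<in>J. exp (\<i> * complex_of_real t * lam j) * z j x)"
    by (simp only: eq)
  from sums_unique[OF this] show ?thesis unfolding transfer_def by simp
qed

lemma transfer_row:
  fixes v :: "nat \<Rightarrow> complex"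
  assumes eig: "\<And>y. y < n \<Longrightarrow> (\<Sum>l<n. v l * adj_mat E l y) = c * v y" and a: "a < n"
  shows "(\<Sum>x<n. v x * transfer n E t x a) = exp (\<i> * complex_of_real t * c) * v a"
proof -
  let ?f = "\<lambda>x k. ((\<i> * complex_of_real t) ^ k / of_nat (fact k)) * mat_pow n (adj_mat E) k x a"
  have S1: "(\<lambda>k. \<Sum>x<n. v x * ?f x k) sums (\<Sum>x<n. v x * transfer n E t x a)"
    unfolding transfer_def
  proof (rule sums_sum)
    fix x assume "x \<in> {..<n}"
    have "?f x sums (\<Sum>k. ?f x k)" by (rule summable_sums[OF transfer_summable])
    then show "(\<lambda>k. v x * ?f x k) sums (v x * (\<Sum>k. ?f x k))" by (rule sums_mult)
  qed
  have E: "(\<lambda>k. \<Sum>x<n. v x * ?f x k) = (\<lambda>k. ((\<i> * complex_of_real t) ^ k / of_nat (fact k) * c ^ k) * v a)"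
  proof
    fix k
    have "(\<Sum>x<n. v x * ?f x k) = ((\<i> * complex_of_real t) ^ k / of_nat (fact k)) * (\<Sum>x<n. v x * mat_pow n (adj_mat E) k x a)"
      by (simp add: sum_distrib_left mult.assoc mult.left_commute)
    also have "\<dots> = ((\<i> * complex_of_real t) ^ k / of_nat (fact k) * c ^ k) * v a"
      using mat_pow_row_eigen[OF eig a] by simp
    finally show "(\<Sum>x<n. v x * ?f x k) = ((\<i> * complex_of_real t) ^ k / of_nat (fact k) * c ^ k) * v a" .
  qed
  have S2: "(\<lambda>k. ((\<i> * complex_of_real t) ^ k / of_nat (fact k) * c ^ k) * v a) sums (exp (\<i> * complex_of_real t * c) * v a)"
    by (intro sums_mult2 exp_sums_c)
  show ?thesis using sums_unique2[OF S1[unfolded E] S2] .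
qed

definition Wv :: "nat \<Rightarrow> complex \<Rightarrow> nat \<Rightarrow> complex" where
  "Wv m \<mu> x = (if x = 3 \<or> x = 4 then 1 else if x = 1 \<or> x = 2 then \<mu> else if x = 0 then \<mu>^2 - 1
     else if x = 5 then \<mu>^3 - 3*\<mu> else if x < 6 + m then \<mu> * (\<mu>^3 - 3*\<mu>) / (\<mu>^2 - 1)
     else (\<mu>^3 - 3*\<mu>) / (\<mu>^2 - 1))"

definition Yp :: "nat \<Rightarrow> complex" where
  "Yp x = (if x = 3 \<or> x = 1 then 1 else if x = 4 \<or> x = 2 then -1 else 0)"

definition Ym :: "nat \<Rightarrow> complex" where
  "Ym x = (if x = 3 \<or> x = 2 then 1 else if x = 4 \<or> x = 1 then -1 else 0)"

definition qeq :: "nat \<Rightarrow> complex \<Rightarrow> bool" where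
  "qeq m \<mu> \<longleftrightarrow> \<mu>^6 - (of_nat m + 5) * \<mu>^4 + (3 * of_nat m + 5) * \<mu>^2 - 1 = 0"

lemma W_nbsum:
  assumes q: "qeq m \<mu>" and mu1: "\<mu>^2 \<noteq> 1" and y: "y < T2_size m"
  shows "nbsum m (Wv m \<mu>) y = \<mu> * Wv m \<mu> y"
proof -
  have d: "\<mu>^2 - 1 \<noteq> 0" using mu1 by simp
  have "y = 0 \<or> y = 1 \<or> y = 2 \<or> y = 3 \<or> y = 4 \<or> y = 5 \<or> (6 \<le> y \<and> y < 6 + m) \<or> (6 + m \<le> y \<and> y < 6 + 2*m)"
    using y by (auto simp: T2_size_def)
  moreover
  { assume "y = 0" then have ?thesis by (simp add: nbsum_def Wv_def algebra_simps power2_eq_square power3_eq_cube) }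
  moreover
  { assume "y = 1" then have ?thesis by (simp add: nbsum_def Wv_def algebra_simps power2_eq_square) }
  moreover
  { assume "y = 2" then have ?thesis by (simp add: nbsum_def Wv_def algebra_simps power2_eq_square) }
  moreover
  { assume "y = 3" then have ?thesis by (simp add: nbsum_def Wv_def) }
  moreover
  { assume "y = 4" then have ?thesis by (simp add: nbsum_def Wv_def) }
  moreover
  { assume "y = 5"
    have s: "(\<Sum>i<m. Wv m \<mu> (6 + i)) = of_nat m * (\<mu> * (\<mu>^3 - 3*\<mu>) / (\<mu>^2 - 1))"
      by (simp add: Wv_def)
    have key: "\<mu> * (\<mu>^3 - 3*\<mu>) * (\<mu>^2 - 1) - (\<mu>^2 - 1) * (\<mu>^2 - 1) - of_nat m * (\<mu> * (\<mu>^3 - 3*\<mu>)) = 0"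
      using q unfolding qeq_def by (simp add: algebra_simps power2_eq_square power3_eq_cube eval_nat_numeral)
    have "(\<mu>^2 - 1) + of_nat m * (\<mu> * (\<mu>^3 - 3*\<mu>) / (\<mu>^2 - 1))
        = ((\<mu>^2 - 1) * (\<mu>^2 - 1) + of_nat m * (\<mu> * (\<mu>^3 - 3*\<mu>))) / (\<mu>^2 - 1)"
      using d by (simp add: field_simps)
    also have "\<dots> = (\<mu> * (\<mu>^3 - 3*\<mu>) * (\<mu>^2 - 1)) / (\<mu>^2 - 1)"
      using key by (simp add: algebra_simps)
    also have "\<dots> = \<mu> * (\<mu>^3 - 3*\<mu>)" using d by simp
    finally have "(\<mu>^2 - 1) + of_nat m * (\<mu> * (\<mu>^3 - 3*\<mu>) / (\<mu>^2 - 1)) = \<mu> * (\<mu>^3 - 3*\<mu>)" .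
    then have ?thesis using \<open>y = 5\<close> s by (simp add: nbsum_def Wv_def)
  }
  moreover
  { assume h: "6 \<le> y \<and> y < 6 + m"
    have "(\<mu>^3 - 3*\<mu>) + (\<mu>^3 - 3*\<mu>) / (\<mu>^2 - 1) = \<mu> * (\<mu> * (\<mu>^3 - 3*\<mu>) / (\<mu>^2 - 1))"
      using d by (simp add: field_simps) (simp add: algebra_simps power2_eq_square power3_eq_cube eval_nat_numeral)
    then have ?thesis using h by (simp add: nbsum_def Wv_def)
  }
  moreover
  { assume h: "6 + m \<le> y \<and> y < 6 + 2*m"
    then have "\<not> (y = 0 \<or> y = 1 \<or> y = 2 \<or> y = 3 \<or> y = 4 \<or> y = 5 \<or> y < 6 + m)"
      and "\<not> (y - m = 0 \<or> y - m = 1 \<or> y - m = 2 \<or> y - m = 3 \<or> y - m = 4 \<or> y - m = 5)"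
      and "y - m < 6 + m" by auto
    then have ?thesis unfolding nbsum_def Wv_def by (simp only: if_False if_True) simp
  }
  ultimately show ?thesis by blast
qed

lemma Yp_nbsum: "y < T2_size m \<Longrightarrow> nbsum m Yp y = 1 * Yp y"
  by (auto simp: nbsum_def Yp_def)

lemma Ym_nbsum: "y < T2_size m \<Longrightarrow> nbsum m Ym y = (-1) * Ym y"
  by (auto simp: nbsum_def Ym_def)

lemma row_eigen_of_nbsum:
  assumes "\<And>y. y < T2_size m \<Longrightarrow> nbsum m v y = c * v y"
  shows "\<And>y. y < T2_size m \<Longrightarrow> (\<Sum>l<T2_size m. v l * adj_mat (T2_edge m) l y) = c * v y"
  using assms nbsum_eq by (simp add: mult.commute)

lemma col_eigen_of_nbsum:
  assumes "\<And>y. y < T2_size m \<Longrightarrow> nbsum m v y = c * v y"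
  shows "\<And>y. y < T2_size m \<Longrightarrow> (\<Sum>l<T2_size m. adj_mat (T2_edge m) y l * v l) = c * v y"
proof -
  fix y assume y: "y < T2_size m"
  have "(\<Sum>l<T2_size m. adj_mat (T2_edge m) y l * v l) = (\<Sum>l<T2_size m. adj_mat (T2_edge m) l y * v l)"
    by (intro sum.cong refl) (simp add: adj_mat_def T2_edge_sym)
  then show "(\<Sum>l<T2_size m. adj_mat (T2_edge m) y l * v l) = c * v y"
    using assms[OF y] nbsum_eq[OF y] by simp
qed

definition EE :: "(nat \<Rightarrow> real) \<Rightarrow> complex \<Rightarrow> nat \<Rightarrow> complex" where
  "EE \<tau> c k = exp (\<i> * complex_of_real (\<tau> k) * c)"

lemma EE_neg: "EE \<tau> c k * EE \<tau> (-c) k = 1"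
  unfolding EE_def by (simp add: exp_add[symmetric])

lemma lim_eig:
  assumes eig: "\<And>y. y < T2_size m \<Longrightarrow> nbsum m v y = c * v y"
    and a: "a < T2_size m" and b: "b < T2_size m"
    and lim: "\<And>x. x < T2_size m \<Longrightarrow> (\<lambda>k. transfer (T2_size m) (T2_edge m) (\<tau> k) x a) \<longlonglongrightarrow> (if x = b then \<gamma> else 0)"
  shows "(\<lambda>k. EE \<tau> c k * v a) \<longlonglongrightarrow> \<gamma> * v b"
proof -
  let ?n = "T2_size m"
  have eq: "(\<Sum>x<?n. v x * transfer ?n (T2_edge m) (\<tau> k) x a) = EE \<tau> c k * v a" for k
    unfolding EE_def by (rule transfer_row[OF row_eigen_of_nbsum[OF eig] a])
  have "(\<lambda>k. \<Sum>x<?n. v x * transfer ?n (T2_edge m) (\<tau> k) x a) \<longlonglongrightarrow> (\<Sum>x<?n. v x * (if x = b then \<gamma> else 0))"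
    by (intro tendsto_sum tendsto_mult_left lim) auto
  moreover have "(\<Sum>x<?n. v x * (if x = b then \<gamma> else 0)) = \<gamma> * v b"
  proof -
    have "(\<Sum>x<?n. v x * (if x = b then \<gamma> else 0)) = (\<Sum>x<?n. (v x * \<gamma>) * (if x = b then 1 else 0))"
      by (intro sum.cong) auto
    also have "\<dots> = v b * \<gamma>" using b by (rule sum_delta_mult2)
    finally show ?thesis by simp
  qed
  ultimately show ?thesis unfolding eq by simp
qed

lemma lim_div:
  assumes "(\<lambda>k. EE \<tau> c k * va) \<longlonglongrightarrow> g" "va \<noteq> 0"
  shows "(\<lambda>k. EE \<tau> c k) \<longlonglongrightarrow> g / va"
proof -
  have "(\<lambda>k. EE \<tau> c k * va / va) \<longlonglongrightarrow> g / va" by (intro tendsto_divide assms tendsto_const)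
  then show ?thesis using assms(2) by simp
qed

lemma pair_prod:
  assumes "(\<lambda>k. EE \<tau> c k) \<longlonglongrightarrow> g1" "(\<lambda>k. EE \<tau> (-c) k) \<longlonglongrightarrow> g2"
  shows "g1 * g2 = 1"
proof -
  have "(\<lambda>k. EE \<tau> c k * EE \<tau> (-c) k) \<longlonglongrightarrow> g1 * g2" by (intro tendsto_mult assms)
  then have "(\<lambda>k. 1::complex) \<longlonglongrightarrow> g1 * g2" by (simp add: EE_neg)
  then show ?thesis using LIMSEQ_unique tendsto_const by metis
qed

lemma odd_pow_neg: fixes \<gamma> :: complex assumes "odd N" "\<gamma>^2 = 1" shows "(-\<gamma>)^N = -\<gamma>"
proof -
  obtain j where N: "N = 2*j + 1" using assms(1) oddE by blast
  have "(-\<gamma>)^N = (-\<gamma>) * ((-\<gamma>)^2)^j" unfolding N by (metis power_add power_mult power_one_right mult.commute)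
  also have "\<dots> = -\<gamma>" using assms(2) by simp
  finally show ?thesis .
qed

lemma swap_contra:
  fixes \<theta>1 \<theta>2 \<theta>3 \<gamma> :: complex and k0 :: int
  assumes h1: "(\<lambda>k. EE \<tau> \<theta>1 k) \<longlonglongrightarrow> \<gamma>" and h2: "(\<lambda>k. EE \<tau> \<theta>2 k) \<longlonglongrightarrow> \<gamma>"
    and h3: "(\<lambda>k. EE \<tau> \<theta>3 k) \<longlonglongrightarrow> \<gamma>"
    and hp: "(\<lambda>k. EE \<tau> 1 k) \<longlonglongrightarrow> -\<gamma>" and hm: "(\<lambda>k. EE \<tau> (-1) k) \<longlonglongrightarrow> -\<gamma>"
    and hs: "\<theta>1 + \<theta>2 + \<theta>3 = of_int (2 * k0 + 1)"
  shows False
proof -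
  have "(-\<gamma>) * (-\<gamma>) = 1" using pair_prod[OF hp hm] .
  then have g2: "\<gamma>^2 = 1" by (simp add: power2_eq_square)
  have "(\<lambda>k. EE \<tau> \<theta>1 k * EE \<tau> \<theta>2 k * EE \<tau> \<theta>3 k) \<longlonglongrightarrow> \<gamma> * \<gamma> * \<gamma>"
    by (intro tendsto_mult h1 h2 h3)
  moreover have "EE \<tau> \<theta>1 k * EE \<tau> \<theta>2 k * EE \<tau> \<theta>3 k = EE \<tau> (of_int (2 * k0 + 1)) k" for k
    unfolding EE_def hs[symmetric] by (simp add: exp_add[symmetric] algebra_simps)
  moreover have "\<gamma> * \<gamma> * \<gamma> = \<gamma>" using g2 by (simp add: power2_eq_square)
  ultimately have A: "(\<lambda>k. EE \<tau> (of_int (2 * k0 + 1)) k) \<longlonglongrightarrow> \<gamma>" by simp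
  have B: "(\<lambda>k. EE \<tau> (of_int (2 * k0 + 1)) k) \<longlonglongrightarrow> -\<gamma>"
  proof (cases "2 * k0 + 1 \<ge> 0")
    case True
    define N where "N = nat (2 * k0 + 1)"
    have oN: "odd N" unfolding N_def using True by (simp add: even_nat_iff)
    have "EE \<tau> (of_int (2 * k0 + 1)) k = (EE \<tau> 1 k) ^ N" for k
    proof -
      have "(of_int (2 * k0 + 1) :: complex) = of_nat N" unfolding N_def using True by simp
      then show ?thesis unfolding EE_def by (simp add: exp_of_nat_mult[symmetric] algebra_simps)
    qed
    moreover have "(\<lambda>k. (EE \<tau> 1 k) ^ N) \<longlonglongrightarrow> (-\<gamma>) ^ N" by (intro tendsto_power hp)
    ultimately show ?thesis using odd_pow_neg[OF oN g2] by simp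
  next
    case False
    define N where "N = nat (-(2 * k0 + 1))"
    have oN: "odd N" unfolding N_def using False by (simp add: even_nat_iff)
    have "EE \<tau> (of_int (2 * k0 + 1)) k = (EE \<tau> (-1) k) ^ N" for k
    proof -
      have "(of_int (2 * k0 + 1) :: complex) = of_nat N * (-1)" unfolding N_def using False by simp
      then show ?thesis unfolding EE_def by (simp add: exp_of_nat_mult[symmetric] algebra_simps)
    qed
    moreover have "(\<lambda>k. (EE \<tau> (-1) k) ^ N) \<longlonglongrightarrow> (-\<gamma>) ^ N" by (intro tendsto_power hm)
    ultimately show ?thesis using odd_pow_neg[OF oN g2] by simp
  qed
  have "\<gamma> = -\<gamma>" using LIMSEQ_unique[OF A B] .
  then have "\<gamma> = 0" by simp
  then show False using g2 by simp
qed


lemma qeq_neg: "qeq m \<mu> \<Longrightarrow> qeq m (-\<mu>)"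
  unfolding qeq_def by (simp add: eval_nat_numeral)

lemma qeq_sq: assumes "m > 0" "qeq m \<mu>" shows "\<mu>^2 \<noteq> 1"
proof
  assume h: "\<mu>^2 = 1"
  have "\<mu>^6 = (\<mu>^2)^3" "\<mu>^4 = (\<mu>^2)^2" by (simp_all add: power_mult[symmetric])
  then have "(2 * of_nat m :: complex) = 0" using assms(2) h unfolding qeq_def by (simp add: algebra_simps)
  then show False using assms(1) by simp
qed

lemma qeq_nz: assumes "qeq m \<mu>" shows "\<mu> \<noteq> 0"
  using assms unfolding qeq_def by auto

lemma Wv_vals: "Wv m \<theta> 3 = 1" "Wv m \<theta> 4 = 1" "Wv m \<theta> 1 = \<theta>" "Wv m \<theta> 2 = \<theta>" "Wv m \<theta> (Suc 0) = \<theta>"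
  by (simp_all add: Wv_def)

lemma Y_vals: "Yp 3 = 1" "Yp 4 = -1" "Yp 1 = 1" "Yp 2 = -1" "Ym 3 = 1" "Ym 4 = -1" "Ym 1 = -1" "Ym 2 = 1" "Yp (Suc 0) = 1" "Ym (Suc 0) = -1"
  by (simp_all add: Yp_def Ym_def)

lemma no_pgst_odd:
  fixes \<theta>1 \<theta>2 \<theta>3 :: complex and k0 :: int
  assumes m: "m > 0" and q1: "qeq m \<theta>1" and q2: "qeq m \<theta>2" and q3: "qeq m \<theta>3"
    and hs: "\<theta>1 + \<theta>2 + \<theta>3 = of_int (2 * k0 + 1)"
    and a: "a \<in> {3,4,1,2}"
  shows "\<not> pgst (T2_size m) (T2_edge m) a b"
proof
  assume "pgst (T2_size m) (T2_edge m) a b"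
  then obtain \<tau> \<gamma> where ab: "a \<noteq> b" and an: "a < T2_size m" and bn: "b < T2_size m"
    and lim: "\<And>x. x < T2_size m \<Longrightarrow> (\<lambda>k. transfer (T2_size m) (T2_edge m) (\<tau> k) x a) \<longlonglongrightarrow> (if x = b then \<gamma> else 0)"
    unfolding pgst_def pgst_wrt_def by blast
  have LW: "(\<lambda>k. EE \<tau> \<theta> k) \<longlonglongrightarrow> \<gamma> * Wv m \<theta> b / Wv m \<theta> a" if q: "qeq m \<theta>" for \<theta>
  proof (rule lim_div)
    show "(\<lambda>k. EE \<tau> \<theta> k * Wv m \<theta> a) \<longlonglongrightarrow> \<gamma> * Wv m \<theta> b"
      using lim_eig[OF W_nbsum[OF q qeq_sq[OF m q]] an bn lim] by blast
    show "Wv m \<theta> a \<noteq> 0" using a qeq_nz[OF q] by (auto simp: Wv_def)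
  qed
  have Yan: "Yp a \<noteq> 0" "Ym a \<noteq> 0" using a by (auto simp: Yp_def Ym_def)
  have LP: "(\<lambda>k. EE \<tau> 1 k) \<longlonglongrightarrow> \<gamma> * Yp b / Yp a"
  proof (rule lim_div[OF _ Yan(1)])
    have "(\<lambda>k. EE \<tau> 1 k * Yp a) \<longlonglongrightarrow> \<gamma> * Yp b"
      using lim_eig[OF Yp_nbsum an bn lim] by blast
    then show "(\<lambda>k. EE \<tau> 1 k * Yp a) \<longlonglongrightarrow> \<gamma> * Yp b" .
  qed
  have LM: "(\<lambda>k. EE \<tau> (-1) k) \<longlonglongrightarrow> \<gamma> * Ym b / Ym a"
  proof (rule lim_div[OF _ Yan(2)])
    have "(\<lambda>k. EE \<tau> (-1) k * Ym a) \<longlonglongrightarrow> \<gamma> * Ym b"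
      using lim_eig[OF Ym_nbsum an bn lim] by blast
    then show "(\<lambda>k. EE \<tau> (-1) k * Ym a) \<longlonglongrightarrow> \<gamma> * Ym b" .
  qed
  have P1: "(\<gamma> * Yp b / Yp a) * (\<gamma> * Ym b / Ym a) = 1" using pair_prod[OF LP LM] .
  have P2: "(\<gamma> * Wv m \<theta>1 b / Wv m \<theta>1 a) * (\<gamma> * Wv m (-\<theta>1) b / Wv m (-\<theta>1) a) = 1"
    using pair_prod[OF LW[OF q1] LW[OF qeq_neg[OF q1]]] .
  have t0: "\<theta>1 \<noteq> 0" using qeq_nz[OF q1] .
  have t1: "\<theta>1^2 \<noteq> 1" using qeq_sq[OF m q1] .
  consider "b \<notin> {3,4,1,2}" | "(a = 3 \<and> b = 4) \<or> (a = 4 \<and> b = 3) \<or> (a = 1 \<and> b = 2) \<or> (a = 2 \<and> b = 1)"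
    | "(a \<in> {3,4} \<and> b \<in> {1,2}) \<or> (a \<in> {1,2} \<and> b \<in> {3,4})"
    using a ab by auto
  then show False
  proof cases
    case 1
    then have "Yp b = 0" by (auto simp: Yp_def)
    then show False using P1 by simp
  next
    case 2
    have r: "Wv m \<theta> b / Wv m \<theta> a = 1" if "qeq m \<theta>" for \<theta>
      using 2 qeq_nz[OF that] by (auto simp: Wv_vals)
    have yp: "Yp b / Yp a = -1" "Ym b / Ym a = -1" using 2 by (auto simp: Y_vals)
    show False
    proof (rule swap_contra[OF _ _ _ _ _ hs])
      show "(\<lambda>k. EE \<tau> \<theta>1 k) \<longlonglongrightarrow> \<gamma>" using LW[OF q1] r[OF q1] by simp
      show "(\<lambda>k. EE \<tau> \<theta>2 k) \<longlonglongrightarrow> \<gamma>" using LW[OF q2] r[OF q2] by simp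
      show "(\<lambda>k. EE \<tau> \<theta>3 k) \<longlonglongrightarrow> \<gamma>" using LW[OF q3] r[OF q3] by simp
      have "\<gamma> * Yp b / Yp a = \<gamma> * (Yp b / Yp a)" "\<gamma> * Ym b / Ym a = \<gamma> * (Ym b / Ym a)" by simp_all
      then show "(\<lambda>k. EE \<tau> 1 k) \<longlonglongrightarrow> -\<gamma>" "(\<lambda>k. EE \<tau> (-1) k) \<longlonglongrightarrow> -\<gamma>"
        using LP LM yp by simp_all
    qed
  next
    case 3
    then have 3: "(a = 3 \<and> b = 1) \<or> (a = 3 \<and> b = 2) \<or> (a = 4 \<and> b = 1) \<or> (a = 4 \<and> b = 2) \<or>
      (a = 1 \<and> b = 3) \<or> (a = 2 \<and> b = 3) \<or> (a = 1 \<and> b = 4) \<or> (a = 2 \<and> b = 4)" by auto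
    have "Yp b / Yp a * (Ym b / Ym a) = -1" using 3 by (auto simp: Y_vals)
    moreover have "(\<gamma> * Yp b / Yp a) * (\<gamma> * Ym b / Ym a) = \<gamma> * \<gamma> * (Yp b / Yp a * (Ym b / Ym a))"
      by (simp add: divide_inverse mult_ac)
    ultimately have "- (\<gamma> * \<gamma>) = 1" using P1 by simp
    then have g2: "\<gamma> * \<gamma> = -1" by (metis minus_minus)
    have W3: "Wv m \<theta>1 b / Wv m \<theta>1 a = \<theta>1 \<and> Wv m (-\<theta>1) b / Wv m (-\<theta>1) a = -\<theta>1 \<or>
          Wv m \<theta>1 b / Wv m \<theta>1 a = 1 / \<theta>1 \<and> Wv m (-\<theta>1) b / Wv m (-\<theta>1) a = 1 / (-\<theta>1)"
      using 3 t0 by (auto simp: Wv_vals)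
    have P2': "\<gamma> * \<gamma> * (Wv m \<theta>1 b / Wv m \<theta>1 a * (Wv m (-\<theta>1) b / Wv m (-\<theta>1) a)) = 1"
      using P2 by (simp add: divide_inverse mult_ac)
    have "\<theta>1 * \<theta>1 = 1"
      using W3
    proof
      assume h: "Wv m \<theta>1 b / Wv m \<theta>1 a = \<theta>1 \<and> Wv m (-\<theta>1) b / Wv m (-\<theta>1) a = -\<theta>1"
      have "\<gamma> * \<gamma> * (\<theta>1 * (-\<theta>1)) = 1" using P2' h by simp
      then show "\<theta>1 * \<theta>1 = 1" unfolding g2 by simp
    next
      assume h: "Wv m \<theta>1 b / Wv m \<theta>1 a = 1 / \<theta>1 \<and> Wv m (-\<theta>1) b / Wv m (-\<theta>1) a = 1 / (-\<theta>1)"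
      have "\<gamma> * \<gamma> * (1 / \<theta>1 * (1 / (-\<theta>1))) = 1" using P2' h by simp
      then have "1 / (\<theta>1 * \<theta>1) = 1" unfolding g2 by simp
      then show "\<theta>1 * \<theta>1 = 1" using t0 by (simp add: divide_eq_1_iff)
    qed
    then show False using t1 by (simp add: power2_eq_square)
  qed
qed

definition pp :: "nat \<Rightarrow> real \<Rightarrow> real" where
  "pp m y = y^3 - (real m + 5) * y^2 + (3 * real m + 5) * y - 1"

lemma pp_cont: "continuous_on S (pp m)"
  unfolding pp_def by (intro continuous_intros)

lemma pp_roots:
  assumes m: "m > 0"
  obtains y1 y2 y3 where "0 < y1" "y1 < 1" "1 < y2" "y2 < 3" "3 < y3"
    "pp m y1 = 0" "pp m y2 = 0" "pp m y3 = 0"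
proof -
  have p0: "pp m 0 = -1" by (simp add: pp_def)
  have p1: "pp m 1 = 2 * real m" by (simp add: pp_def algebra_simps)
  have p3: "pp m 3 = -4" by (simp add: pp_def algebra_simps power2_eq_square power3_eq_cube)
  have pM: "pp m (real m + 5) = (3 * real m + 5) * (real m + 5) - 1"
    by (simp add: pp_def algebra_simps power2_eq_square power3_eq_cube)
  have mpos: "real m \<ge> 1" using m by simp
  obtain y1 where y1: "0 \<le> y1" "y1 \<le> 1" "pp m y1 = 0"
    using IVT'[of "pp m" 0 0 1, OF _ _ _ pp_cont] p0 p1 by auto
  obtain y2 where y2: "1 \<le> y2" "y2 \<le> 3" "pp m y2 = 0"
    using IVT2'[of "pp m" 3 0 1, OF _ _ _ pp_cont] p3 p1 by auto
  obtain y3 where y3: "3 \<le> y3" "y3 \<le> real m + 5" "pp m y3 = 0"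
    using IVT'[of "pp m" 3 0 "real m + 5", OF _ _ _ pp_cont] p3 pM mpos
    by (auto simp: algebra_simps)
  have "y1 \<noteq> 0" using y1 p0 by auto
  moreover have "y1 \<noteq> 1" "y2 \<noteq> 1" using y1 y2 p1 m by auto
  moreover have "y2 \<noteq> 3" "y3 \<noteq> 3" using y2 y3 p3 by auto
  ultimately have "0 < y1" "y1 < 1" "1 < y2" "y2 < 3" "3 < y3" using y1 y2 y3 by (auto simp: less_le)
  then show ?thesis using y1 y2 y3 by (intro that)
qed

lemma vieta3:
  fixes y1 y2 y3 :: real
  assumes "pp m y1 = 0" "pp m y2 = 0" "pp m y3 = 0" "y1 \<noteq> y2" "y1 \<noteq> y3" "y2 \<noteq> y3"
  shows "y1 + y2 + y3 = real m + 5" "y1*y2 + y1*y3 + y2*y3 = 3 * real m + 5" "y1*y2*y3 = 1"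
proof -
  define a where "a = real m + 5"
  define b where "b = 3 * real m + 5"
  have e1: "y1^3 - a*y1^2 + b*y1 - 1 = 0" "y2^3 - a*y2^2 + b*y2 - 1 = 0" "y3^3 - a*y3^2 + b*y3 - 1 = 0"
    using assms(1-3) unfolding pp_def a_def b_def by auto
  have "(y1 - y2) * (y1^2 + y1*y2 + y2^2 - a*(y1+y2) + b) = 0"
    using e1(1) e1(2) by (simp add: algebra_simps power2_eq_square power3_eq_cube)
  then have Q12: "y1^2 + y1*y2 + y2^2 - a*(y1+y2) + b = 0" using assms(4) by simp
  have "(y1 - y3) * (y1^2 + y1*y3 + y3^2 - a*(y1+y3) + b) = 0"
    using e1(1) e1(3) by (simp add: algebra_simps power2_eq_square power3_eq_cube)
  then have Q13: "y1^2 + y1*y3 + y3^2 - a*(y1+y3) + b = 0" using assms(5) by simp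
  have "(y2 - y3) * (y1 + y2 + y3 - a) = 0"
    using Q12 Q13 by (simp add: algebra_simps power2_eq_square)
  then have s1: "y1 + y2 + y3 = a" using assms(6) by simp
  have s2: "y1*y2 + y1*y3 + y2*y3 = b"
  proof -
    have "a = y1 + y2 + y3" using s1 by simp
    then show ?thesis using Q12 by (simp add: algebra_simps power2_eq_square)
  qed
  have s3: "y1*y2*y3 = 1"
  proof -
    have "y1^3 - (y1 + y2 + y3)*y1^2 + (y1*y2 + y1*y3 + y2*y3)*y1 - y1*y2*y3 = 0"
      by (simp add: algebra_simps power2_eq_square power3_eq_cube)
    then show ?thesis using e1(1) s1 s2 by simp
  qed
  show "y1 + y2 + y3 = real m + 5" "y1*y2 + y1*y3 + y2*y3 = 3 * real m + 5" "y1*y2*y3 = 1"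
    using s1 s2 s3 unfolding a_def b_def by auto
qed

lemma mpr_pCons: "map_poly (of_rat :: rat \<Rightarrow> 'a::field_char_0) (pCons c p) = pCons (of_rat c) (map_poly of_rat p)"
  by (rule poly_eqI) (simp add: coeff_map_poly coeff_pCons split: nat.split)

lemma mpr_add: "map_poly (of_rat :: rat \<Rightarrow> 'a::field_char_0) (p + q) = map_poly of_rat p + map_poly of_rat q"
  by (rule poly_eqI) (simp add: coeff_map_poly of_rat_add)

lemma mpr_mult: "map_poly (of_rat :: rat \<Rightarrow> 'a::field_char_0) (p * q) = map_poly of_rat p * map_poly of_rat q"
  by (rule poly_eqI) (simp add: coeff_map_poly coeff_mult of_rat_sum of_rat_mult)

lemma q_poly_eval:
  "poly (map_poly (of_rat :: rat \<Rightarrow> 'a::field_char_0) (q_poly m)) x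
     = x^6 - (of_nat m + 5) * x^4 + (3 * of_nat m + 5) * x^2 - 1"
  unfolding q_poly_def by (simp add: mpr_pCons of_rat_minus of_rat_diff of_rat_add of_rat_mult algebra_simps eval_nat_numeral)

lemma q_poly_coeffs: "coeff (q_poly m) 6 = 1" "coeff (q_poly m) 0 = -1" "degree (q_poly m) = 6"
  unfolding q_poly_def by (simp_all add: eval_nat_numeral)

lemma poly_sum6:
  fixes G :: "rat poly"
  assumes "degree G \<le> 6"
  shows "poly (map_poly (of_rat :: rat \<Rightarrow> 'a::field_char_0) G) x = (\<Sum>i\<le>6. of_rat (coeff G i) * x^i)"
proof -
  have "poly (map_poly (of_rat :: rat \<Rightarrow> 'a) G) x = (\<Sum>i\<le>degree (map_poly (of_rat :: rat \<Rightarrow> 'a) G). coeff (map_poly (of_rat :: rat \<Rightarrow> 'a) G) i * x^i)"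
    by (rule poly_altdef)
  also have "\<dots> = (\<Sum>i\<le>6. coeff (map_poly (of_rat :: rat \<Rightarrow> 'a) G) i * x^i)"
  proof (rule sum.mono_neutral_left)
    show "{..degree (map_poly (of_rat :: rat \<Rightarrow> 'a) G)} \<subseteq> {..6}" using assms by (auto simp: degree_map_poly)
    show "\<forall>i\<in>{..6} - {..degree (map_poly (of_rat :: rat \<Rightarrow> 'a) G)}. coeff (map_poly (of_rat :: rat \<Rightarrow> 'a) G) i * x ^ i = 0"
      by (auto simp: coeff_eq_0)
  qed auto
  also have "\<dots> = (\<Sum>i\<le>6. of_rat (coeff G i) * x^i)" by (simp add: coeff_map_poly)
  finally show ?thesis .
qed

lemma minpoly6:
  fixes \<theta> :: real and c :: "nat \<Rightarrow> rat"
  assumes irr: "irreducible (q_poly m)"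
    and q\<theta>: "\<theta>^6 - (real m + 5) * \<theta>^4 + (3 * real m + 5) * \<theta>^2 - 1 = 0"
    and c: "(\<Sum>i\<le>6. of_rat (c i) * \<theta>^i) = 0"
  shows "c 6 = - c 0"
proof -
  define G where "G = (\<Sum>i\<le>6. monom (c i) i)"
  have cG: "coeff G i = (if i \<le> 6 then c i else 0)" for i
    unfolding G_def by (simp add: coeff_sum)
  have dG: "degree G \<le> 6"
    by (rule degree_le) (auto simp: cG)
  have G\<theta>: "poly (map_poly of_rat G) \<theta> = 0"
    using c by (simp add: poly_sum6[OF dG] cG)
  have q0: "poly (map_poly of_rat (q_poly m)) \<theta> = 0"
    using q\<theta> by (simp add: q_poly_eval)
  define g where "g = gcd (q_poly m) G"
  have "fst (bezout_coefficients (q_poly m) G) * q_poly m + snd (bezout_coefficients (q_poly m) G) * G = g"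
    unfolding g_def by (rule bezout_coefficients_fst_snd)
  then have g\<theta>: "poly (map_poly of_rat g) \<theta> = 0"
    by (metis G\<theta> q0 mpr_add mpr_mult poly_add poly_mult mult_zero_right add_0)
  have "g dvd q_poly m" unfolding g_def by simp
  then obtain h where qh: "q_poly m = g * h" by (elim dvdE)
  have "\<not> is_unit g"
  proof
    assume "is_unit g"
    then obtain a where "g = [:a:]" "a \<noteq> 0" by (metis is_unit_poly_iff one_neq_zero dvd_0_left)
    then show False using g\<theta> by (simp add: mpr_pCons)
  qed
  then have "is_unit h" using irr qh by (metis irreducibleD)
  then have "q_poly m dvd g" using qh by (metis dvd_mult_unit_iff dvd_refl)
  moreover have "g dvd G" unfolding g_def by simp
  ultimately have "q_poly m dvd G" by (rule dvd_trans)
  then obtain r where Gr: "G = q_poly m * r" by (elim dvdE)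
  show ?thesis
  proof (cases "r = 0")
    case True
    then have "G = 0" using Gr by simp
    then show ?thesis using cG[of 6] cG[of 0] by simp
  next
    case False
    have qn: "q_poly m \<noteq> 0" using q_poly_coeffs(1)[of m] by auto
    have "degree G = 6 + degree r" using Gr False qn degree_mult_eq[OF qn False] by (simp add: q_poly_coeffs)
    then have "degree r = 0" using dG by simp
    then obtain r0 where "r = [:r0:]" by (metis degree_eq_zeroE)
    then have "G = smult r0 (q_poly m)" using Gr by simp
    then have "coeff G 6 = r0" "coeff G 0 = - r0" by (simp_all add: q_poly_coeffs)
    then show ?thesis using cG[of 6] cG[of 0] by simp
  qed
qed


lemma sum_atMost6: "(\<Sum>i\<le>(6::nat). f i) = f 0 + f 1 + f 2 + f 3 + f 4 + f 5 + (f 6 :: 'a::comm_monoid_add)"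
  by (simp add: eval_nat_numeral atMost_Suc add_ac)

lemma indep3:
  fixes \<theta>1 \<theta>2 \<theta>3 :: real and l1 l2 l3 n :: int
  assumes irr: "irreducible (q_poly m)"
    and q1: "\<theta>1^6 - (real m + 5) * \<theta>1^4 + (3 * real m + 5) * \<theta>1^2 - 1 = 0"
    and s23: "\<theta>2^2 + \<theta>3^2 = real m + 5 - \<theta>1^2" and pr: "\<theta>1 * \<theta>2 * \<theta>3 = 1"
    and rel: "of_int l1 * \<theta>1 + of_int l2 * \<theta>2 + of_int l3 * \<theta>3 = of_int n"
  shows "l1 = 0 \<and> l2 = 0 \<and> l3 = 0 \<and> n = 0"
proof -
  define L1 where "L1 = real_of_int l1"
  define L2 where "L2 = real_of_int l2"
  define L3 where "L3 = real_of_int l3"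
  define N where "N = real_of_int n"
  define M where "M = real m"
  note defs = L1_def L2_def L3_def N_def M_def
  define W2 where "W2 = \<theta>1 * (N - L1*\<theta>1)^2 - 2*L2*L3 - L2^2*\<theta>1*(M+5-\<theta>1^2)"
  define W3 where "W3 = \<theta>1 * (N - L1*\<theta>1)^2 - 2*L2*L3 - L3^2*\<theta>1*(M+5-\<theta>1^2)"
  have u: "N - L1*\<theta>1 = L2*\<theta>2 + L3*\<theta>3" using rel unfolding defs by simp
  have s: "M + 5 - \<theta>1^2 = \<theta>2^2 + \<theta>3^2" using s23 unfolding defs by simp
  have "W2 = \<theta>1*\<theta>3^2*(L3^2 - L2^2) + 2*L2*L3*(\<theta>1*\<theta>2*\<theta>3 - 1)"
    unfolding W2_def u s by (simp add: algebra_simps power2_eq_square)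
  then have W2e: "W2 = \<theta>1*\<theta>3^2*(L3^2 - L2^2)" using pr by simp
  have "W3 = \<theta>1*\<theta>2^2*(L2^2 - L3^2) + 2*L2*L3*(\<theta>1*\<theta>2*\<theta>3 - 1)"
    unfolding W3_def u s by (simp add: algebra_simps power2_eq_square)
  then have W3e: "W3 = \<theta>1*\<theta>2^2*(L2^2 - L3^2)" using pr by simp
  have "W2 * W3 = - ((\<theta>1*\<theta>2*\<theta>3)^2 * (L2^2 - L3^2)^2)"
    unfolding W2e W3e by (simp add: algebra_simps power2_eq_square)
  then have Z: "W2 * W3 + (L2^2 - L3^2)^2 = 0" using pr by simp
  define A3 where "A3 = l1^2 + l2^2"
  define A2 where "A2 = -2*n*l1"
  define A1 where "A1 = n^2 - l2^2*(int m+5)"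
  define A0 where "A0 = -2*l2*l3"
  define B3 where "B3 = l1^2 + l3^2"
  define B1 where "B1 = n^2 - l3^2*(int m+5)"
  have W2p: "W2 = of_int A3 * \<theta>1^3 + of_int A2 * \<theta>1^2 + of_int A1 * \<theta>1 + of_int A0"
    unfolding W2_def A3_def A2_def A1_def A0_def defs by (simp add: algebra_simps power2_eq_square power3_eq_cube)
  have W3p: "W3 = of_int B3 * \<theta>1^3 + of_int A2 * \<theta>1^2 + of_int B1 * \<theta>1 + of_int A0"
    unfolding W3_def B3_def A2_def B1_def A0_def defs by (simp add: algebra_simps power2_eq_square power3_eq_cube)
  define cc :: "nat \<Rightarrow> int" where "cc i = (if i = 0 then A0*A0 + (l2^2 - l3^2)^2 else if i = 1 then A1*A0 + A0*B1
     else if i = 2 then A2*A0 + A1*B1 + A0*A2 else if i = 3 then A3*A0 + A2*B1 + A1*A2 + A0*B3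
     else if i = 4 then A3*B1 + A2*A2 + A1*B3 else if i = 5 then A3*A2 + A2*B3 else A3*B3)" for i
  have "(\<Sum>i\<le>6. of_rat (of_int (cc i)) * \<theta>1^i) = W2 * W3 + (L2^2 - L3^2)^2"
    unfolding sum_atMost6 of_rat_of_int_eq W2p W3p
    by (simp add: cc_def defs algebra_simps power2_eq_square power3_eq_cube eval_nat_numeral)
  then have "(\<Sum>i\<le>6. of_rat (of_int (cc i)) * \<theta>1^i) = 0" using Z by simp
  from minpoly6[OF irr q1 this] have "cc 6 = - cc 0" by simp
  then have "(l1^2 + l2^2) * (l1^2 + l3^2) + (l2^2 + l3^2)^2 = 0"
    unfolding cc_def A3_def B3_def A0_def by (simp add: algebra_simps power2_eq_square)
  moreover have "(l1^2 + l2^2) * (l1^2 + l3^2) \<ge> 0" by simp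
  moreover have "(l2^2 + l3^2)^2 \<ge> 0" by simp
  ultimately have "(l2^2 + l3^2)^2 = 0" "(l1^2 + l2^2) * (l1^2 + l3^2) = 0" by linarith+
  then have "l2 = 0" "l3 = 0" "l1 = 0" by (auto simp: add_nonneg_eq_0_iff)
  moreover then have "n = 0" using rel by simp
  ultimately show ?thesis by simp
qed


lemma indep_module:
  fixes \<theta>1 \<theta>2 \<theta>3 :: real
  assumes ind: "\<And>l1 l2 l3 n. of_int l1 * \<theta>1 + of_int l2 * \<theta>2 + of_int l3 * \<theta>3 = of_int n \<Longrightarrow> l1 = 0 \<and> l2 = 0 \<and> l3 = 0 \<and> n = 0"
    and d: "\<theta>1 \<noteq> \<theta>2" "\<theta>1 \<noteq> \<theta>3" "\<theta>2 \<noteq> \<theta>3" "\<theta>1 \<noteq> 1" "\<theta>2 \<noteq> 1" "\<theta>3 \<noteq> 1"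
  shows "module.independent (\<lambda>r x. of_int r * x) {\<theta>1, \<theta>2, \<theta>3, 1::real}"
proof -
  interpret M: Modules.module "(\<lambda>r. (*) (real_of_int r))"
    by (simp add: Modules.module.intro distrib_left mult.commute)
  let ?S = "{\<theta>1, \<theta>2, \<theta>3, 1::real}"
  have "M.independent ?S"
    unfolding M.independent_explicit_module
  proof (intro allI impI)
    fix t u v
    assume t: "finite t" "t \<subseteq> ?S" and sum0: "(\<Sum>v\<in>t. real_of_int (u v) * v) = 0" and vt: "v \<in> t"
    define u' where "u' v = (if v \<in> t then u v else 0)" for v
    have "(\<Sum>v\<in>?S. real_of_int (u' v) * v) = (\<Sum>v\<in>t. real_of_int (u' v) * v)"
      using t by (intro sum.mono_neutral_right) (auto simp: u'_def)
    also have "\<dots> = 0" using sum0 by (simp add: u'_def)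
    finally have "(\<Sum>v\<in>?S. real_of_int (u' v) * v) = 0" .
    then have "of_int (u' \<theta>1) * \<theta>1 + of_int (u' \<theta>2) * \<theta>2 + of_int (u' \<theta>3) * \<theta>3 = of_int (- u' 1)"
      using d by (simp add: algebra_simps)
    from ind[OF this] have "u' \<theta>1 = 0" "u' \<theta>2 = 0" "u' \<theta>3 = 0" "u' 1 = 0" by auto
    then have "u' v = 0" using vt t by auto
    then show "u v = 0" using vt by (simp add: u'_def)
  qed
  then show ?thesis by simp
qed

lemma lim_inv1: "(\<lambda>x. 1 / (real x + 1)) \<longlonglongrightarrow> 0"
proof -
  have eq: "(\<lambda>x. 1 / (real x + 1)) = (\<lambda>n. inverse (real (Suc n)))"
    by (rule ext) (simp add: inverse_eq_divide)
  show ?thesis unfolding eq by (rule LIMSEQ_inverse_real_of_nat)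
qed

lemma kron_seq:
  fixes \<theta>1 \<theta>2 \<theta>3 :: real
  assumes ind: "\<And>l1 l2 l3 n. of_int l1 * \<theta>1 + of_int l2 * \<theta>2 + of_int l3 * \<theta>3 = of_int n \<Longrightarrow> l1 = 0 \<and> l2 = 0 \<and> l3 = 0 \<and> n = 0"
    and d: "\<theta>1 \<noteq> \<theta>2" "\<theta>1 \<noteq> \<theta>3" "\<theta>2 \<noteq> \<theta>3" "\<theta>1 \<noteq> 1" "\<theta>2 \<noteq> 1" "\<theta>3 \<noteq> 1"
  obtains \<tau> :: "nat \<Rightarrow> real" where "\<And>k. \<tau> k \<in> odd_pi_multiples"
    "\<And>x. x \<in> {\<theta>1, \<theta>2, \<theta>3} \<Longrightarrow> (\<lambda>k. exp (\<i> * complex_of_real (\<tau> k) * complex_of_real x)) \<longlonglongrightarrow> 1"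
proof -
  define th :: "nat \<Rightarrow> real" where "th i = (if i = 0 then \<theta>1 else if i = 1 then \<theta>2 else if i = 2 then \<theta>3 else 1)" for i
  have img: "th ` {..3} = {\<theta>1, \<theta>2, \<theta>3, 1}"
    by (auto simp: th_def atMost_Suc eval_nat_numeral image_iff)
  have indp: "module.independent (\<lambda>r x. of_int r * x) (th ` {..3})"
    unfolding img by (rule indep_module[OF ind d]) auto
  have inj: "inj_on th {..3}"
    unfolding inj_on_def using d by (auto simp: th_def atMost_Suc eval_nat_numeral)
  have th3: "th 3 = 1" by (simp add: th_def)
  have "\<exists>k mm. \<forall>i<3. \<bar>of_int k * th i - of_int (mm i) - (- th i / 2)\<bar> < 1 / (real j + 1)" for j :: nat
  proof -
    obtain k mm where "\<And>i. i < 3 \<Longrightarrow> \<bar>of_int k * th i - of_int (mm i) - (- th i / 2)\<bar> < 1 / (real j + 1)"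
      using Kronecker_thm_2[OF indp inj th3, of "1 / (real j + 1)" "\<lambda>i. - th i / 2"] by auto
    then show ?thesis by blast
  qed
  then obtain K MM where KM: "\<And>j i. i < 3 \<Longrightarrow> \<bar>of_int (K j) * th i - of_int (MM j i) - (- th i / 2)\<bar> < 1 / (real j + 1)"
    by (metis choice)
  define \<tau> where "\<tau> j = real_of_int (2 * K j + 1) * pi" for j
  have odd: "\<tau> j \<in> odd_pi_multiples" for j unfolding \<tau>_def odd_pi_multiples_def by blast
  have conv: "(\<lambda>j. exp (\<i> * complex_of_real (\<tau> j) * complex_of_real (th i))) \<longlonglongrightarrow> 1" if i: "i < 3" for i
  proof -
    define e where "e j = \<tau> j * th i - 2 * pi * of_int (MM j i)" for j
    have eb: "\<bar>e j\<bar> \<le> 2 * pi * (1 / (real j + 1))" for j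
    proof -
      have "e j = 2 * pi * (of_int (K j) * th i - of_int (MM j i) - (- th i / 2))"
        unfolding e_def \<tau>_def by (simp add: algebra_simps)
      then have "\<bar>e j\<bar> = 2 * pi * \<bar>of_int (K j) * th i - of_int (MM j i) - (- th i / 2)\<bar>"
        by (simp add: abs_mult)
      also have "\<dots> \<le> 2 * pi * (1 / (real j + 1))"
        using KM[OF i, of j] by (intro mult_left_mono) auto
      finally show ?thesis .
    qed
    have "(\<lambda>j. 2 * pi * (1 / (real j + 1))) \<longlonglongrightarrow> 2 * pi * 0"
      by (intro tendsto_mult tendsto_const lim_inv1)
    then have lim0: "(\<lambda>j. 2 * pi * (1 / (real j + 1))) \<longlonglongrightarrow> 0" by simp
    have ev: "\<forall>\<^sub>F j in sequentially. norm (e j) \<le> 2 * pi * (1 / (real j + 1))"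
      using eb by (intro always_eventually allI) simp
    have "e \<longlonglongrightarrow> 0" by (rule Lim_null_comparison[OF ev lim0])
    then have "(\<lambda>j. exp (\<i> * complex_of_real (e j))) \<longlonglongrightarrow> exp (\<i> * complex_of_real 0)"
      by (intro tendsto_intros)
    moreover have "exp (\<i> * complex_of_real (e j)) = exp (\<i> * complex_of_real (\<tau> j) * complex_of_real (th i))" for j
    proof -
      have "\<i> * complex_of_real (\<tau> j) * complex_of_real (th i) = \<i> * complex_of_real (e j) + (2 * of_int (MM j i) * pi) * \<i>"
        unfolding e_def by (simp add: algebra_simps)
      then have "exp (\<i> * complex_of_real (\<tau> j) * complex_of_real (th i)) = exp (\<i> * complex_of_real (e j)) * exp ((2 * of_int (MM j i) * pi) * \<i>)"
        by (simp add: exp_add)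
      also have "exp ((2 * of_int (MM j i) * pi) * \<i>) = 1"
        by (rule exp_integer_2pi) simp
      finally show ?thesis by simp
    qed
    ultimately show ?thesis by simp
  qed
  show ?thesis
  proof (rule that[OF odd])
    fix x assume "x \<in> {\<theta>1, \<theta>2, \<theta>3}"
    then consider "x = th 0" | "x = th 1" | "x = th 2" by (auto simp: th_def)
    then show "(\<lambda>k. exp (\<i> * complex_of_real (\<tau> k) * complex_of_real x)) \<longlonglongrightarrow> 1"
      by cases (use conv in auto)
  qed
qed

definition inner :: "nat \<Rightarrow> complex \<Rightarrow> complex \<Rightarrow> complex" where
  "inner m \<mu> \<nu> = 2 * Wv m \<mu> 3 * Wv m \<nu> 3 + 2 * Wv m \<mu> 1 * Wv m \<nu> 1 + Wv m \<mu> 0 * Wv m \<nu> 0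
     + Wv m \<mu> 5 * Wv m \<nu> 5 + of_nat m * Wv m \<mu> 6 * Wv m \<nu> 6 + of_nat m * Wv m \<mu> (6+m) * Wv m \<nu> (6+m)"

definition Nn :: "nat \<Rightarrow> complex \<Rightarrow> complex" where "Nn m \<mu> = inner m \<mu> \<mu>"

lemma orth_abs:
  fixes \<mu> \<nu> M a1 a2 a3 a4 a5 a6 b1 b2 b3 b4 b5 b6 :: complex
  assumes "\<mu>*a1 = a2" "\<mu>*a2 = a3 + a1" "\<mu>*a3 = 2*a2 + a4" "\<mu>*a4 = a3 + M*a5" "\<mu>*a5 = a4 + a6" "\<mu>*a6 = a5"
    and "\<nu>*b1 = b2" "\<nu>*b2 = b3 + b1" "\<nu>*b3 = 2*b2 + b4" "\<nu>*b4 = b3 + M*b5" "\<nu>*b5 = b4 + b6" "\<nu>*b6 = b5"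
  shows "(\<mu> - \<nu>) * (2*a1*b1 + 2*a2*b2 + a3*b3 + a4*b4 + M*a5*b5 + M*a6*b6) = 0"
proof -
  have "\<mu> * (2*a1*b1 + 2*a2*b2 + a3*b3 + a4*b4 + M*a5*b5 + M*a6*b6)
      = 2*(\<mu>*a1)*b1 + 2*(\<mu>*a2)*b2 + (\<mu>*a3)*b3 + (\<mu>*a4)*b4 + M*(\<mu>*a5)*b5 + M*(\<mu>*a6)*b6"
    by (simp add: algebra_simps)
  also have "\<dots> = 2*a2*b1 + 2*(a3+a1)*b2 + (2*a2+a4)*b3 + (a3+M*a5)*b4 + M*(a4+a6)*b5 + M*a5*b6"
    using assms by simp
  finally have A: "\<mu> * (2*a1*b1 + 2*a2*b2 + a3*b3 + a4*b4 + M*a5*b5 + M*a6*b6)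
      = 2*a2*b1 + 2*(a3+a1)*b2 + (2*a2+a4)*b3 + (a3+M*a5)*b4 + M*(a4+a6)*b5 + M*a5*b6" .
  have "\<nu> * (2*a1*b1 + 2*a2*b2 + a3*b3 + a4*b4 + M*a5*b5 + M*a6*b6)
      = 2*a1*(\<nu>*b1) + 2*a2*(\<nu>*b2) + a3*(\<nu>*b3) + a4*(\<nu>*b4) + M*a5*(\<nu>*b5) + M*a6*(\<nu>*b6)"
    by (simp add: algebra_simps)
  also have "\<dots> = 2*a1*b2 + 2*a2*(b3+b1) + a3*(2*b2+b4) + a4*(b3+M*b5) + M*a5*(b4+b6) + M*a6*b5"
    using assms by simp
  finally have B: "\<nu> * (2*a1*b1 + 2*a2*b2 + a3*b3 + a4*b4 + M*a5*b5 + M*a6*b6)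
      = 2*a1*b2 + 2*a2*(b3+b1) + a3*(2*b2+b4) + a4*(b3+M*b5) + M*a5*(b4+b6) + M*a6*b5" .
  show ?thesis unfolding left_diff_distrib A B by (simp add: algebra_simps)
qed

lemma W_class_eqs:
  assumes m: "m > 0" and q: "qeq m \<mu>" and mu1: "\<mu>^2 \<noteq> 1"
  shows "\<mu> * Wv m \<mu> 3 = Wv m \<mu> 1" "\<mu> * Wv m \<mu> 1 = Wv m \<mu> 0 + Wv m \<mu> 3"
    "\<mu> * Wv m \<mu> 0 = 2 * Wv m \<mu> 1 + Wv m \<mu> 5" "\<mu> * Wv m \<mu> 5 = Wv m \<mu> 0 + of_nat m * Wv m \<mu> 6"
    "\<mu> * Wv m \<mu> 6 = Wv m \<mu> 5 + Wv m \<mu> (6+m)" "\<mu> * Wv m \<mu> (6+m) = Wv m \<mu> 6"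
proof -
  have n: "T2_size m = 2*m + 6" by (simp add: T2_size_def)
  have E: "\<And>y. y < T2_size m \<Longrightarrow> nbsum m (Wv m \<mu>) y = \<mu> * Wv m \<mu> y" using W_nbsum[OF q mu1] by blast
  show "\<mu> * Wv m \<mu> 3 = Wv m \<mu> 1" using E[of 3] n by (simp add: nbsum_def)
  show "\<mu> * Wv m \<mu> 1 = Wv m \<mu> 0 + Wv m \<mu> 3" using E[of 1] n by (simp add: nbsum_def)
  show "\<mu> * Wv m \<mu> 0 = 2 * Wv m \<mu> 1 + Wv m \<mu> 5" using E[of 0] n by (simp add: nbsum_def Wv_vals)
  have s: "(\<Sum>i<m. Wv m \<mu> (6 + i)) = of_nat m * Wv m \<mu> 6"
  proof -
    have "(\<Sum>i<m. Wv m \<mu> (6 + i)) = (\<Sum>i<m. Wv m \<mu> 6)" using m by (intro sum.cong) (auto simp: Wv_def)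
    then show ?thesis by simp
  qed
  show "\<mu> * Wv m \<mu> 5 = Wv m \<mu> 0 + of_nat m * Wv m \<mu> 6" using E[of 5] n s by (simp add: nbsum_def)
  show "\<mu> * Wv m \<mu> 6 = Wv m \<mu> 5 + Wv m \<mu> (6+m)" using E[of 6] n m by (simp add: nbsum_def add.commute)
  show "\<mu> * Wv m \<mu> (6+m) = Wv m \<mu> 6" using E[of "6+m"] n m by (simp add: nbsum_def)
qed

lemma orth:
  assumes m: "m > 0" and q: "qeq m \<mu>" "qeq m \<nu>" and mu1: "\<mu>^2 \<noteq> 1" "\<nu>^2 \<noteq> 1" and ne: "\<mu> \<noteq> \<nu>"
  shows "inner m \<mu> \<nu> = 0"
proof -
  note A = W_class_eqs[OF m q(1) mu1(1)] and B = W_class_eqs[OF m q(2) mu1(2)]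
  have "(\<mu> - \<nu>) * inner m \<mu> \<nu> = 0"
    unfolding inner_def
    by (rule orth_abs[where M = "of_nat m"]) (use A B in \<open>simp_all add: algebra_simps\<close>)
  then show ?thesis using ne by simp
qed


lemma six_roots_zero:
  fixes h :: "nat \<Rightarrow> complex" and R :: "complex set"
  assumes fin: "finite R" and c6: "card R = 6" and z: "\<And>\<nu>. \<nu> \<in> R \<Longrightarrow> (\<Sum>i\<le>5. h i * \<nu>^i) = 0"
    and i: "i \<le> 5"
  shows "h i = 0"
proof -
  define P where "P = (\<Sum>i\<le>5. monom (h i) i)"
  have cP: "coeff P j = (if j \<le> 5 then h j else 0)" for j
    unfolding P_def by (simp add: coeff_sum)
  have pP: "poly P x = (\<Sum>i\<le>5. h i * x^i)" for x
    unfolding P_def by (simp add: poly_sum poly_monom)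
  have "P = 0"
  proof (rule ccontr)
    assume P0: "P \<noteq> 0"
    have dP: "degree P \<le> 5" by (rule degree_le) (auto simp: cP)
    have "R \<subseteq> {x. poly P x = 0}" using z pP by auto
    then have "card R \<le> card {x. poly P x = 0}"
      by (intro card_mono poly_roots_finite P0)
    also have "\<dots> \<le> degree P" by (rule card_poly_roots_bound[OF P0])
    finally show False using dP c6 by simp
  qed
  then show ?thesis using cP[of i] i by simp
qed

lemma completeness:
  assumes m: "m > 0" and fin: "finite R" and c6: "card R = 6"
    and R: "\<And>\<mu>. \<mu> \<in> R \<Longrightarrow> qeq m \<mu> \<and> \<mu>^2 \<noteq> 1 \<and> Nn m \<mu> \<noteq> 0"
  shows "(\<Sum>\<mu>\<in>R. Wv m \<mu> 3 / Nn m \<mu>) = 1/2" "(\<Sum>\<mu>\<in>R. Wv m \<mu> 1 / Nn m \<mu>) = 0"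
    "(\<Sum>\<mu>\<in>R. Wv m \<mu> 0 / Nn m \<mu>) = 0" "(\<Sum>\<mu>\<in>R. Wv m \<mu> 5 / Nn m \<mu>) = 0"
    "(\<Sum>\<mu>\<in>R. Wv m \<mu> 6 / Nn m \<mu>) = 0" "(\<Sum>\<mu>\<in>R. Wv m \<mu> (6+m) / Nn m \<mu>) = 0"
proof -
  define T where "T v = (\<Sum>\<mu>\<in>R. Wv m \<mu> v * inverse (Nn m \<mu>))" for v
  define M :: complex where "M = of_nat m"
  define r1 where "r1 = 1/2 - T 3"
  define r2 where "r2 = - T 1"
  define r3 where "r3 = - T 0"
  define r4 where "r4 = - T 5"
  define r5 where "r5 = - T 6"
  define r6 where "r6 = - T (6+m)"
  have K: "2*r1*Wv m \<nu> 3 + 2*r2*Wv m \<nu> 1 + r3*Wv m \<nu> 0 + r4*Wv m \<nu> 5 + M*r5*Wv m \<nu> 6 + M*r6*Wv m \<nu> (6+m) = 0"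
    if \<nu>: "\<nu> \<in> R" for \<nu>
  proof -
    have "(\<Sum>\<mu>\<in>R. inner m \<mu> \<nu> * inverse (Nn m \<mu>))
       = (\<Sum>\<mu>\<in>R. 2*Wv m \<nu> 3*(Wv m \<mu> 3 * inverse (Nn m \<mu>)) + 2*Wv m \<nu> 1*(Wv m \<mu> 1 * inverse (Nn m \<mu>))
           + Wv m \<nu> 0*(Wv m \<mu> 0 * inverse (Nn m \<mu>)) + Wv m \<nu> 5*(Wv m \<mu> 5 * inverse (Nn m \<mu>))
           + M*Wv m \<nu> 6*(Wv m \<mu> 6 * inverse (Nn m \<mu>)) + M*Wv m \<nu> (6+m)*(Wv m \<mu> (6+m) * inverse (Nn m \<mu>)))"
      by (intro sum.cong refl) (simp add: inner_def M_def algebra_simps)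
    also have "\<dots> = 2*Wv m \<nu> 3*T 3 + 2*Wv m \<nu> 1*T 1 + Wv m \<nu> 0*T 0 + Wv m \<nu> 5*T 5 + M*Wv m \<nu> 6*T 6 + M*Wv m \<nu> (6+m)*T (6+m)"
      unfolding T_def by (simp add: sum.distrib sum_distrib_left)
    finally have S1: "(\<Sum>\<mu>\<in>R. inner m \<mu> \<nu> * inverse (Nn m \<mu>)) = 2*Wv m \<nu> 3*T 3 + 2*Wv m \<nu> 1*T 1 + Wv m \<nu> 0*T 0 + Wv m \<nu> 5*T 5 + M*Wv m \<nu> 6*T 6 + M*Wv m \<nu> (6+m)*T (6+m)" .
    have "(\<Sum>\<mu>\<in>R. inner m \<mu> \<nu> * inverse (Nn m \<mu>)) = inner m \<nu> \<nu> * inverse (Nn m \<nu>) + (\<Sum>\<mu>\<in>R - {\<nu>}. inner m \<mu> \<nu> * inverse (Nn m \<mu>))"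
      using fin \<nu> by (simp add: sum.remove)
    also have "(\<Sum>\<mu>\<in>R - {\<nu>}. inner m \<mu> \<nu> * inverse (Nn m \<mu>)) = 0"
      using R \<nu> by (intro sum.neutral) (auto intro!: orth[OF m])
    also have "inner m \<nu> \<nu> * inverse (Nn m \<nu>) = 1" using R[OF \<nu>] by (simp add: Nn_def)
    finally have S2: "(\<Sum>\<mu>\<in>R. inner m \<mu> \<nu> * inverse (Nn m \<mu>)) = 1" by simp
    have "Wv m \<nu> 3 = 1" by (simp add: Wv_vals)
    then show ?thesis using S1 S2 unfolding r1_def r2_def r3_def r4_def r5_def r6_def by (simp add: algebra_simps)
  qed
  define h :: "nat \<Rightarrow> complex" where "h i = (if i = 0 then -2*r1 + r3 else if i = 1 then -2*r2 + 3*r4 - 3*M*r6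
     else if i = 2 then 2*r1 - 2*r3 - 3*M*r5 else if i = 3 then 2*r2 - 4*r4 + M*r6
     else if i = 4 then r3 + M*r5 else r4)" for i
  have H: "(\<Sum>i\<le>5. h i * \<nu>^i) = 0" if \<nu>: "\<nu> \<in> R" for \<nu>
  proof -
    have d: "\<nu>^2 - 1 \<noteq> 0" using R[OF \<nu>] by simp
    have "(\<nu>^2 - 1) * (2*r1*Wv m \<nu> 3 + 2*r2*Wv m \<nu> 1 + r3*Wv m \<nu> 0 + r4*Wv m \<nu> 5 + M*r5*Wv m \<nu> 6 + M*r6*Wv m \<nu> (6+m))
      = (\<nu>^2 - 1) * (2*r1*Wv m \<nu> 3 + 2*r2*Wv m \<nu> 1 + r3*Wv m \<nu> 0 + r4*Wv m \<nu> 5) + M*r5*((\<nu>^2 - 1) * Wv m \<nu> 6) + M*r6*((\<nu>^2 - 1) * Wv m \<nu> (6+m))"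
      by (simp add: algebra_simps)
    also have "\<dots> = (\<nu>^2 - 1) * (2*r1 + 2*r2*\<nu> + r3*(\<nu>^2-1) + r4*(\<nu>^3 - 3*\<nu>)) + M*r5*\<nu>*(\<nu>^3 - 3*\<nu>) + M*r6*(\<nu>^3 - 3*\<nu>)"
    proof -
      have w6: "(\<nu>^2 - 1) * Wv m \<nu> 6 = \<nu>*(\<nu>^3 - 3*\<nu>)" using m d by (simp add: Wv_def)
      have w7: "(\<nu>^2 - 1) * Wv m \<nu> (6+m) = \<nu>^3 - 3*\<nu>" using d by (simp add: Wv_def)
      show ?thesis unfolding w6 w7 by (simp add: Wv_vals Wv_def)
    qed
    also have "\<dots> = (\<Sum>i\<le>5. h i * \<nu>^i)"
    proof -
      have "(\<Sum>i\<le>5. h i * \<nu>^i) = h 0 + h 1 * \<nu> + h 2 * \<nu>^2 + h 3 * \<nu>^3 + h 4 * \<nu>^4 + h 5 * \<nu>^5"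
        by (simp add: eval_nat_numeral atMost_Suc add_ac)
      also have "\<dots> = (-2*r1 + r3) + (-2*r2 + 3*r4 - 3*M*r6) * \<nu> + (2*r1 - 2*r3 - 3*M*r5) * \<nu>^2
          + (2*r2 - 4*r4 + M*r6) * \<nu>^3 + (r3 + M*r5) * \<nu>^4 + r4 * \<nu>^5"
        by (simp add: h_def)
      finally show ?thesis by (simp add: algebra_simps eval_nat_numeral)
    qed
    finally show ?thesis using K[OF \<nu>] by simp
  qed
  have h0: "h i = 0" if "i \<le> 5" for i by (rule six_roots_zero[OF fin c6 H that])
  have Mn: "M \<noteq> 0" using m by (simp add: M_def)
  have e0: "-2*r1 + r3 = 0" using h0[of 0] by (simp add: h_def)
  have e1: "-2*r2 + 3*r4 - 3*M*r6 = 0" using h0[of 1] by (simp add: h_def)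
  have e2: "2*r1 - 2*r3 - 3*M*r5 = 0" using h0[of 2] by (simp add: h_def)
  have e3: "2*r2 - 4*r4 + M*r6 = 0" using h0[of 3] by (simp add: h_def)
  have e4: "r3 + M*r5 = 0" using h0[of 4] by (simp add: h_def)
  have e5: "r4 = 0" using h0[of 5] by (simp add: h_def)
  have "(-2*r2 + 3*r4 - 3*M*r6) + (2*r2 - 4*r4 + M*r6) = 0" using e1 e3 by simp
  then have "- r4 - 2*(M*r6) = 0" by (simp add: algebra_simps)
  then have "M * r6 = 0" using e5 by simp
  then have z6: "r6 = 0" using Mn by simp
  have z2: "r2 = 0" using e3 e5 z6 by simp
  have r3e: "r3 = 2*r1" using e0 by (simp add: algebra_simps)
  have Mr5: "M*r5 = -r3" using e4 by (simp add: eq_neg_iff_add_eq_0 add.commute)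
  have "2*r1 - 2*r3 - 3*(M*r5) = 0" using e2 by (simp add: mult.assoc)
  then have "2*r1 - 2*r3 + 3*r3 = 0" unfolding Mr5 by simp
  then have "4 * r1 = 0" unfolding r3e by (simp add: algebra_simps)
  then have z1: "r1 = 0" by simp
  have z3: "r3 = 0" using e0 z1 by simp
  have z5: "r5 = 0" using e4 z3 Mn by simp
  have Tdiv: "T v = (\<Sum>\<mu>\<in>R. Wv m \<mu> v / Nn m \<mu>)" for v unfolding T_def by (simp add: divide_inverse)
  show "(\<Sum>\<mu>\<in>R. Wv m \<mu> 3 / Nn m \<mu>) = 1/2" "(\<Sum>\<mu>\<in>R. Wv m \<mu> 1 / Nn m \<mu>) = 0"
    "(\<Sum>\<mu>\<in>R. Wv m \<mu> 0 / Nn m \<mu>) = 0" "(\<Sum>\<mu>\<in>R. Wv m \<mu> 5 / Nn m \<mu>) = 0"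
    "(\<Sum>\<mu>\<in>R. Wv m \<mu> 6 / Nn m \<mu>) = 0" "(\<Sum>\<mu>\<in>R. Wv m \<mu> (6+m) / Nn m \<mu>) = 0"
    unfolding Tdiv[symmetric] using z1 z2 z3 e5 z5 z6
    unfolding r1_def r2_def r3_def r4_def r5_def r6_def by simp_all
qed

lemma nbsum_scale:
  fixes g :: "nat \<Rightarrow> complex"
  shows "nbsum m (\<lambda>l. c * g l) y = c * nbsum m g y"
  unfolding nbsum_def by (simp add: distrib_left sum_distrib_left)

lemma exp_odd_pi:
  assumes "\<tau> \<in> odd_pi_multiples"
  shows "exp (\<i> * complex_of_real \<tau> * 1) = -1" "exp (\<i> * complex_of_real \<tau> * (-1)) = -1"
proof -
  obtain j :: int where t: "\<tau> = real_of_int (2 * j + 1) * pi" using assms unfolding odd_pi_multiples_def by blast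
  have eq: "\<i> * complex_of_real \<tau> = ((2 * of_int j + 1) * pi) * \<i>" unfolding t by (simp add: algebra_simps)
  have e: "exp (\<i> * complex_of_real \<tau>) = -1" unfolding eq by (rule exp_integer_2pi_plus1) simp
  then show "exp (\<i> * complex_of_real \<tau> * 1) = -1" by simp
  have "exp (\<i> * complex_of_real \<tau> * (-1)) = inverse (exp (\<i> * complex_of_real \<tau>))"
    by (simp add: exp_minus[symmetric])
  then show "exp (\<i> * complex_of_real \<tau> * (-1)) = -1" using e by simp
qed

locale rootsR =
  fixes m :: nat and R :: "complex set"
  assumes m: "m > 0" and fin: "finite R" and c6: "card R = 6"
    and R: "\<And>\<mu>. \<mu> \<in> R \<Longrightarrow> qeq m \<mu> \<and> \<mu>^2 \<noteq> 1 \<and> Nn m \<mu> \<noteq> 0"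
begin

lemma S1: assumes y: "y < T2_size m"
  shows "(\<Sum>\<mu>\<in>R. Wv m \<mu> y / Nn m \<mu>) = (if y = 3 \<or> y = 4 then 1/2 else 0)"
proof -
  note C = completeness[OF m fin c6 R]
  have "y = 0 \<or> y = 1 \<or> y = 2 \<or> y = 3 \<or> y = 4 \<or> y = 5 \<or> (6 \<le> y \<and> y < 6 + m) \<or> 6 + m \<le> y" by linarith
  moreover
  { assume "y = 4" then have ?thesis using C(1) by (simp add: Wv_vals) }
  moreover
  { assume "y = 3" then have ?thesis using C(1) by (simp add: Wv_vals) }
  moreover
  { assume "y = 2" then have ?thesis using C(2) by (simp add: Wv_vals) }
  moreover
  { assume "y = 1" then have ?thesis using C(2) by (simp add: Wv_vals) }
  moreover
  { assume "y = 0" then have ?thesis using C(3) by simp }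
  moreover
  { assume "y = 5" then have ?thesis using C(4) by simp }
  moreover
  { assume h: "6 \<le> y \<and> y < 6 + m"
    then have "Wv m \<mu> y = Wv m \<mu> 6" for \<mu> using m by (simp add: Wv_def)
    then have ?thesis using C(5) h by simp }
  moreover
  { assume h: "6 + m \<le> y"
    then have "Wv m \<mu> y = Wv m \<mu> (6+m)" for \<mu> by (simp add: Wv_def)
    then have ?thesis using C(6) h by simp }
  ultimately show ?thesis by blast
qed

lemma S2: assumes y: "y < T2_size m"
  shows "(\<Sum>\<mu>\<in>R. \<mu> * Wv m \<mu> y / Nn m \<mu>) = (if y = 1 \<or> y = 2 then 1/2 else 0)"
proof -
  let ?n = "T2_size m"
  let ?S = "\<lambda>l. (if l = 3 \<or> l = 4 then 1/2 else 0) :: complex"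
  have "(\<Sum>\<mu>\<in>R. \<mu> * Wv m \<mu> y / Nn m \<mu>) = (\<Sum>\<mu>\<in>R. (\<Sum>l<?n. adj_mat (T2_edge m) l y * Wv m \<mu> l) / Nn m \<mu>)"
    using y R by (intro sum.cong refl) (simp add: nbsum_eq W_nbsum)
  also have "\<dots> = (\<Sum>l<?n. adj_mat (T2_edge m) l y * (\<Sum>\<mu>\<in>R. Wv m \<mu> l / Nn m \<mu>))"
    by (simp add: sum_divide_distrib sum_distrib_left mult.assoc) (rule sum.swap)
  also have "\<dots> = (\<Sum>l<?n. adj_mat (T2_edge m) l y * ?S l)"
    by (intro sum.cong refl) (simp add: S1)
  also have "\<dots> = nbsum m ?S y" by (rule nbsum_eq[OF y])
  also have "\<dots> = (if y = 1 \<or> y = 2 then 1/2 else 0)" by (auto simp: nbsum_def)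
  finally show ?thesis .
qed


lemma R_ne1: "\<mu> \<in> R \<Longrightarrow> \<mu> \<noteq> 1" "\<mu> \<in> R \<Longrightarrow> \<mu> \<noteq> -1"
  using R by fastforce+

definition zc :: "complex \<Rightarrow> nat \<Rightarrow> complex" where
  "zc j x = (if j = 1 then inverse 4 * Yp x else if j = -1 then inverse 4 * Ym x else inverse (Nn m j) * Wv m j x)"

definition ze :: "complex \<Rightarrow> nat \<Rightarrow> complex" where
  "ze j x = (if j = 1 then inverse 4 * Yp x else if j = -1 then (- inverse 4) * Ym x else (j * inverse (Nn m j)) * Wv m j x)"

lemma J_facts: "1 \<notin> insert (-1) R" "(-1::complex) \<notin> R" "finite (insert 1 (insert (-1) R))"
  using R_ne1 fin by auto

lemma transfer_c:
  assumes x: "x < T2_size m"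
  shows "transfer (T2_size m) (T2_edge m) t x 3 = exp (\<i> * complex_of_real t * 1) * (inverse 4 * Yp x)
     + exp (\<i> * complex_of_real t * (-1)) * (inverse 4 * Ym x)
     + (\<Sum>\<mu>\<in>R. exp (\<i> * complex_of_real t * \<mu>) * (inverse (Nn m \<mu>) * Wv m \<mu> x))"
proof -
  let ?J = "insert 1 (insert (-1) R)"
  have eig: "(\<Sum>l<T2_size m. adj_mat (T2_edge m) y l * zc j l) = j * zc j y"
    if j: "j \<in> ?J" and y: "y < T2_size m" for j y
  proof (rule col_eigen_of_nbsum[OF _ y])
    fix y assume y: "y < T2_size m"
    consider "j = 1" | "j = -1" | "j \<in> R" using j by auto
    then show "nbsum m (zc j) y = j * zc j y"
    proof cases
      case 1
      have e: "zc j = (\<lambda>x. inverse 4 * Yp x)" using 1 by (auto simp: zc_def)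
      have "nbsum m (zc j) y = inverse 4 * nbsum m Yp y" unfolding e by (rule nbsum_scale)
      also have "\<dots> = j * zc j y" using 1 Yp_nbsum[OF y] by (simp add: zc_def)
      finally show ?thesis .
    next
      case 2
      have e: "zc j = (\<lambda>x. inverse 4 * Ym x)" using 2 by (auto simp: zc_def)
      have "nbsum m (zc j) y = inverse 4 * nbsum m Ym y" unfolding e by (rule nbsum_scale)
      also have "\<dots> = j * zc j y" using 2 Ym_nbsum[OF y] by (simp add: zc_def)
      finally show ?thesis .
    next
      case 3
      have e: "zc j = (\<lambda>x. inverse (Nn m j) * Wv m j x)" using 3 R_ne1 by (auto simp: zc_def)
      have "nbsum m (zc j) y = inverse (Nn m j) * nbsum m (Wv m j) y" unfolding e by (rule nbsum_scale)
      also have "\<dots> = j * zc j y" using 3 W_nbsum[OF _ _ y] R R_ne1 by (simp add: zc_def)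
      finally show ?thesis .
    qed
  qed
  have dec: "(if y = 3 then 1 else 0) = (\<Sum>j\<in>?J. zc j y)" if y: "y < T2_size m" for y
  proof -
    have "(\<Sum>j\<in>?J. zc j y) = inverse 4 * Yp y + inverse 4 * Ym y + (\<Sum>j\<in>R. inverse (Nn m j) * Wv m j y)"
      using J_facts R_ne1 by (simp add: zc_def add.assoc cong: sum.cong)
    also have "(\<Sum>j\<in>R. inverse (Nn m j) * Wv m j y) = (if y = 3 \<or> y = 4 then 1/2 else 0)"
      using S1[OF y] by (simp add: divide_inverse mult.commute)
    finally show ?thesis by (auto simp: Yp_def Ym_def)
  qed
  have "transfer (T2_size m) (T2_edge m) t x 3 = (\<Sum>j\<in>?J. exp (\<i> * complex_of_real t * j) * zc j x)"
    by (rule transfer_col[OF J_facts(3) _ x eig dec]) (auto simp: T2_size_def)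
  also have "\<dots> = exp (\<i> * complex_of_real t * 1) * (inverse 4 * Yp x)
     + exp (\<i> * complex_of_real t * (-1)) * (inverse 4 * Ym x)
     + (\<Sum>\<mu>\<in>R. exp (\<i> * complex_of_real t * \<mu>) * (inverse (Nn m \<mu>) * Wv m \<mu> x))"
    using J_facts R_ne1 by (simp add: zc_def add.assoc cong: sum.cong)
  finally show ?thesis .
qed


lemma transfer_e:
  assumes x: "x < T2_size m"
  shows "transfer (T2_size m) (T2_edge m) t x 1 = exp (\<i> * complex_of_real t * 1) * (inverse 4 * Yp x)
     + exp (\<i> * complex_of_real t * (-1)) * ((- inverse 4) * Ym x)
     + (\<Sum>\<mu>\<in>R. exp (\<i> * complex_of_real t * \<mu>) * ((\<mu> * inverse (Nn m \<mu>)) * Wv m \<mu> x))"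
proof -
  let ?J = "insert 1 (insert (-1) R)"
  have eig: "(\<Sum>l<T2_size m. adj_mat (T2_edge m) y l * ze j l) = j * ze j y"
    if j: "j \<in> ?J" and y: "y < T2_size m" for j y
  proof (rule col_eigen_of_nbsum[OF _ y])
    fix y assume y: "y < T2_size m"
    consider "j = 1" | "j = -1" | "j \<in> R" using j by auto
    then show "nbsum m (ze j) y = j * ze j y"
    proof cases
      case 1
      have e: "ze j = (\<lambda>x. inverse 4 * Yp x)" using 1 by (auto simp: ze_def)
      have "nbsum m (ze j) y = inverse 4 * nbsum m Yp y" unfolding e by (rule nbsum_scale)
      also have "\<dots> = j * ze j y" using 1 Yp_nbsum[OF y] by (simp add: ze_def)
      finally show ?thesis .
    next
      case 2
      have e: "ze j = (\<lambda>x. (- inverse 4) * Ym x)" using 2 by (auto simp: ze_def)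
      have "nbsum m (ze j) y = (- inverse 4) * nbsum m Ym y" unfolding e by (rule nbsum_scale)
      also have "\<dots> = j * ze j y" using 2 Ym_nbsum[OF y] by (simp add: ze_def)
      finally show ?thesis .
    next
      case 3
      have e: "ze j = (\<lambda>x. (j * inverse (Nn m j)) * Wv m j x)" using 3 R_ne1 by (auto simp: ze_def)
      have "nbsum m (ze j) y = (j * inverse (Nn m j)) * nbsum m (Wv m j) y" unfolding e by (rule nbsum_scale)
      also have "\<dots> = j * ze j y" using 3 W_nbsum[OF _ _ y] R R_ne1 by (simp add: ze_def)
      finally show ?thesis .
    qed
  qed
  have dec: "(if y = 1 then 1 else 0) = (\<Sum>j\<in>?J. ze j y)" if y: "y < T2_size m" for y
  proof -
    have "(\<Sum>j\<in>?J. ze j y) = inverse 4 * Yp y + (- inverse 4) * Ym y + (\<Sum>j\<in>R. (j * inverse (Nn m j)) * Wv m j y)"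
      using J_facts R_ne1 by (simp add: ze_def add.assoc cong: sum.cong)
    also have "(\<Sum>j\<in>R. (j * inverse (Nn m j)) * Wv m j y) = (if y = 1 \<or> y = 2 then 1/2 else 0)"
      using S2[OF y] by (simp add: divide_inverse mult_ac)
    finally show ?thesis by (auto simp: Yp_def Ym_def)
  qed
  have "transfer (T2_size m) (T2_edge m) t x 1 = (\<Sum>j\<in>?J. exp (\<i> * complex_of_real t * j) * ze j x)"
    by (rule transfer_col[OF J_facts(3) _ x eig dec]) (auto simp: T2_size_def)
  also have "\<dots> = exp (\<i> * complex_of_real t * 1) * (inverse 4 * Yp x)
     + exp (\<i> * complex_of_real t * (-1)) * ((- inverse 4) * Ym x)
     + (\<Sum>\<mu>\<in>R. exp (\<i> * complex_of_real t * \<mu>) * ((\<mu> * inverse (Nn m \<mu>)) * Wv m \<mu> x))"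
    using J_facts R_ne1 by (simp add: ze_def add.assoc cong: sum.cong)
  finally show ?thesis .
qed

lemma pgst_pos:
  assumes odd: "\<And>k. \<tau> k \<in> odd_pi_multiples"
    and conv: "\<And>\<mu>. \<mu> \<in> R \<Longrightarrow> (\<lambda>k. exp (\<i> * complex_of_real (\<tau> k) * \<mu>)) \<longlonglongrightarrow> 1"
  shows "pgst_wrt (T2_size m) (T2_edge m) odd_pi_multiples 3 4"
    "pgst_wrt (T2_size m) (T2_edge m) odd_pi_multiples 1 2"
proof -
  have n: "3 < T2_size m" "4 < T2_size m" "1 < T2_size m" "2 < T2_size m" by (auto simp: T2_size_def)
  have limc: "(\<lambda>k. transfer (T2_size m) (T2_edge m) (\<tau> k) x 3) \<longlonglongrightarrow> (if x = 4 then 1 else 0)"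
    if x: "x < T2_size m" for x
  proof -
    have eq: "transfer (T2_size m) (T2_edge m) (\<tau> k) x 3 = (-1) * (inverse 4 * Yp x) + (-1) * (inverse 4 * Ym x)
       + (\<Sum>\<mu>\<in>R. exp (\<i> * complex_of_real (\<tau> k) * \<mu>) * (inverse (Nn m \<mu>) * Wv m \<mu> x))" for k
      using transfer_c[OF x, of "\<tau> k"] exp_odd_pi[OF odd[of k]] by simp
    have "(\<lambda>k. (-1) * (inverse 4 * Yp x) + (-1) * (inverse 4 * Ym x)
       + (\<Sum>\<mu>\<in>R. exp (\<i> * complex_of_real (\<tau> k) * \<mu>) * (inverse (Nn m \<mu>) * Wv m \<mu> x)))
      \<longlonglongrightarrow> (-1) * (inverse 4 * Yp x) + (-1) * (inverse 4 * Ym x) + (\<Sum>\<mu>\<in>R. 1 * (inverse (Nn m \<mu>) * Wv m \<mu> x))"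
      by (intro tendsto_add tendsto_const tendsto_sum tendsto_mult conv)
    moreover have "(\<Sum>\<mu>\<in>R. 1 * (inverse (Nn m \<mu>) * Wv m \<mu> x)) = (if x = 3 \<or> x = 4 then 1/2 else 0)"
      using S1[OF x] by (simp add: divide_inverse mult.commute)
    moreover have "(-1) * (inverse 4 * Yp x) + (-1) * (inverse 4 * Ym x) + (if x = 3 \<or> x = 4 then 1/2 else 0)
        = (if x = 4 then 1 else 0 :: complex)"
      by (auto simp: Yp_def Ym_def)
    ultimately show ?thesis unfolding eq by simp
  qed
  have lime: "(\<lambda>k. transfer (T2_size m) (T2_edge m) (\<tau> k) x 1) \<longlonglongrightarrow> (if x = 2 then 1 else 0)"
    if x: "x < T2_size m" for x
  proof -
    have eq: "transfer (T2_size m) (T2_edge m) (\<tau> k) x 1 = (-1) * (inverse 4 * Yp x) + (-1) * ((- inverse 4) * Ym x)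
       + (\<Sum>\<mu>\<in>R. exp (\<i> * complex_of_real (\<tau> k) * \<mu>) * ((\<mu> * inverse (Nn m \<mu>)) * Wv m \<mu> x))" for k
      using transfer_e[OF x, of "\<tau> k"] exp_odd_pi[OF odd[of k]] by simp
    have "(\<lambda>k. (-1) * (inverse 4 * Yp x) + (-1) * ((- inverse 4) * Ym x)
       + (\<Sum>\<mu>\<in>R. exp (\<i> * complex_of_real (\<tau> k) * \<mu>) * ((\<mu> * inverse (Nn m \<mu>)) * Wv m \<mu> x)))
      \<longlonglongrightarrow> (-1) * (inverse 4 * Yp x) + (-1) * ((- inverse 4) * Ym x) + (\<Sum>\<mu>\<in>R. 1 * ((\<mu> * inverse (Nn m \<mu>)) * Wv m \<mu> x))"
      by (intro tendsto_add tendsto_const tendsto_sum tendsto_mult conv)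
    moreover have "(\<Sum>\<mu>\<in>R. 1 * ((\<mu> * inverse (Nn m \<mu>)) * Wv m \<mu> x)) = (if x = 1 \<or> x = 2 then 1/2 else 0)"
      using S2[OF x] by (simp add: divide_inverse mult_ac)
    moreover have "(-1) * (inverse 4 * Yp x) + (-1) * ((- inverse 4) * Ym x) + (if x = 1 \<or> x = 2 then 1/2 else 0)
        = (if x = 2 then 1 else 0 :: complex)"
      by (auto simp: Yp_def Ym_def)
    ultimately show ?thesis unfolding eq by simp
  qed
  show "pgst_wrt (T2_size m) (T2_edge m) odd_pi_multiples 3 4"
    unfolding pgst_wrt_def
  proof (intro conjI exI[of _ \<tau>] exI[of _ 1] allI impI)
    fix x assume "x < T2_size m"
    then show "(\<lambda>k. transfer (T2_size m) (T2_edge m) (\<tau> k) x 3) \<longlonglongrightarrow> (if x = 4 then 1 else 0)" by (rule limc)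
  qed (use n odd in auto)
  show "pgst_wrt (T2_size m) (T2_edge m) odd_pi_multiples 1 2"
    unfolding pgst_wrt_def
  proof (intro conjI exI[of _ \<tau>] exI[of _ 1] allI impI)
    fix x assume "x < T2_size m"
    then show "(\<lambda>k. transfer (T2_size m) (T2_edge m) (\<tau> k) x 1) \<longlonglongrightarrow> (if x = 2 then 1 else 0)" by (rule lime)
  qed (use n odd in auto)
qed

end

lemma deg3_form:
  fixes f :: "'a::comm_ring_1 poly"
  assumes "degree f = 3"
  shows "f = [:coeff f 0, coeff f 1, coeff f 2, coeff f 3:]"
proof (rule poly_eqI)
  fix n
  show "coeff f n = coeff [:coeff f 0, coeff f 1, coeff f 2, coeff f 3:] n"
  proof (cases "n \<le> 3")
    case True
    then have "n = 0 \<or> n = 1 \<or> n = 2 \<or> n = 3" by auto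
    then show ?thesis by (auto simp: numeral_eq_Suc)
  next
    case False
    then have "coeff f n = 0" using assms by (intro coeff_eq_0) simp
    moreover have "coeff [:coeff f 0, coeff f 1, coeff f 2, coeff f 3:] n = 0"
      using False by (auto simp: coeff_pCons split: nat.split)
    ultimately show ?thesis by simp
  qed
qed

lemma q_factor_coeffs:
  fixes a0 a1 a2 :: rat
  assumes "q_poly m = - ([:a0, a1, a2, 1:] * pcompose [:a0, a1, a2, 1:] [:0, -1:])"
  shows "a0 * a0 = 1" "2 * a1 - a2 * a2 = - (of_nat m + 5)" "a1 * a1 - 2 * a0 * a2 = 3 * of_nat m + 5"
  using assms unfolding q_poly_def by (simp_all add: pcompose_pCons algebra_simps)


lemma no_sq_16: fixes w t :: int assumes "w^2 + 4 = 16 * t" shows False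
proof (cases "even w")
  case True
  then obtain z where w: "w = 2 * z" by (elim evenE)
  then have z: "z^2 + 1 = 4 * t" using assms by (simp add: power2_eq_square algebra_simps)
  show False
  proof (cases "even z")
    case True
    then obtain y where "z = 2 * y" by (elim evenE)
    then have "4 * (t - y^2) = 1" using z by (simp add: power2_eq_square algebra_simps)
    then show False by presburger
  next
    case False
    then obtain y where "z = 2 * y + 1" by (elim oddE)
    then have "4 * (t - y^2 - y) = 2" using z by (simp add: power2_eq_square algebra_simps)
    then show False by presburger
  qed
next
  case False
  then obtain z where "w = 2 * z + 1" by (elim oddE)
  then have "16 * t - 4 * z^2 - 4 * z = 5" using assms by (simp add: power2_eq_square algebra_simps)
  then show False by presburger
qed

lemma parity_contra:
  fixes a0 a1 a2 :: rat and k :: int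
  assumes e0: "a0 * a0 = 1" and e1: "2 * a1 - a2 * a2 = - (of_nat m + 5)"
    and e2: "a1 * a1 - 2 * a0 * a2 = 3 * of_nat m + 5" and a2: "a2 = of_int (-2 * k)"
  shows False
proof -
  obtain s :: int where s: "a0 = of_int s" "s = 1 \<or> s = -1"
    using e0 by (metis square_eq_1_iff of_int_1 of_int_minus)
  define U where "U = 4 * k^2 - int m - 5"
  have a1: "a1 = of_int U / 2" using e1 a2 unfolding U_def by (simp add: field_simps power2_eq_square)
  have "of_int U * of_int U / 4 - 2 * of_int s * of_int (-2 * k) = (3 * of_nat m + 5 :: rat)"
    using e2 a1 a2 s by (simp add: field_simps)
  then have "of_int (U * U) = (of_int (4 * (3 * int m + 5) - 16 * s * k) :: rat)"
    by (simp add: field_simps)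
  then have UU: "U * U = 4 * (3 * int m + 5) - 16 * s * k" by (simp only: of_int_eq_iff)
  have "(U + 6)^2 + 4 = 16 * (3 * k^2 - s * k)"
    using UU unfolding U_def by (simp add: power2_eq_square algebra_simps)
  then show False by (rule no_sq_16)
qed


lemma reducible_part:
  fixes f :: "rat poly" and \<theta>1 \<theta>2 \<theta>3 :: complex
  assumes m: "m > 0" and lc: "lead_coeff f = 1" and d3: "degree f = 3"
    and qf: "q_poly m = - (f * pcompose f [:0, -1:])"
    and ff: "map_poly of_rat f = [:-\<theta>1, 1:] * [:-\<theta>2, 1:] * [:-\<theta>3, 1:]"
  shows "\<not> (\<exists>k::int. \<theta>1 + \<theta>2 + \<theta>3 = of_int (2 * k))"
    "(\<exists>k::int. \<theta>1 + \<theta>2 + \<theta>3 = of_int (2 * k + 1)) \<Longrightarrow>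
       (\<forall>a\<in>{vc, vd, ve, vf}. \<forall>b. \<not> pgst (T2_size m) (T2_edge m) a b)"
proof -
  define a0 where "a0 = coeff f 0"
  define a1 where "a1 = coeff f 1"
  define a2 where "a2 = coeff f 2"
  have c3: "coeff f 3 = 1" using lc d3 by simp
  have fe: "f = [:a0, a1, a2, 1:]" using deg3_form[OF d3] c3 unfolding a0_def a1_def a2_def by simp
  note E = q_factor_coeffs[OF qf[unfolded fe]]
  have mf: "map_poly (of_rat :: rat \<Rightarrow> complex) f = [:of_rat a0, of_rat a1, of_rat a2, 1:]"
    unfolding fe by (simp add: mpr_pCons)
  have "[:of_rat a0, of_rat a1, of_rat a2, 1:] = [:-\<theta>1, 1:] * [:-\<theta>2, 1:] * [:-\<theta>3, 1:]"
    using ff mf by simp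
  then have A2: "of_rat a2 = - (\<theta>1 + \<theta>2 + \<theta>3)"
    by (simp add: algebra_simps)
  show "\<not> (\<exists>k::int. \<theta>1 + \<theta>2 + \<theta>3 = of_int (2 * k))"
  proof
    assume "\<exists>k::int. \<theta>1 + \<theta>2 + \<theta>3 = of_int (2 * k)"
    then obtain k :: int where "\<theta>1 + \<theta>2 + \<theta>3 = of_int (2 * k)" by blast
    moreover have "(of_rat (of_int (-2 * k)) :: complex) = of_int (-2 * k)" by (rule of_rat_of_int_eq)
    ultimately have "(of_rat a2 :: complex) = of_rat (of_int (-2 * k))" using A2 by simp
    then have "a2 = of_int (-2 * k)" by (simp only: of_rat_eq_iff)
    then show False using parity_contra[OF E] by blast
  qed
  have roots: "poly (map_poly (of_rat :: rat \<Rightarrow> complex) f) \<theta> = 0" if "\<theta> \<in> {\<theta>1, \<theta>2, \<theta>3}" for \<theta>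
    using that unfolding ff poly_mult by auto
  have qeqs: "qeq m \<theta>" if th: "\<theta> \<in> {\<theta>1, \<theta>2, \<theta>3}" for \<theta>
  proof -
    define A0 A1 A2 :: complex where "A0 = of_rat a0" and "A1 = of_rat a1" and "A2 = of_rat a2"
    have F: "A0 + A1 * \<theta> + A2 * \<theta>^2 + \<theta>^3 = 0"
      using roots[OF th] unfolding mf A0_def A1_def A2_def by (simp add: algebra_simps power2_eq_square power3_eq_cube)
    have R0: "A0 * A0 = 1" using E(1) unfolding A0_def by (metis of_rat_1 of_rat_mult)
    have R1: "2 * A1 - A2 * A2 = - (of_nat m + 5)"
    proof -
      have "(of_rat (2 * a1 - a2 * a2) :: complex) = of_rat (- (of_nat m + 5))" using E(2) by simp
      then show ?thesis unfolding A1_def A2_def by (simp add: of_rat_diff of_rat_mult of_rat_minus of_rat_add)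
    qed
    have R2: "A1 * A1 - 2 * A0 * A2 = 3 * of_nat m + 5"
    proof -
      have "(of_rat (a1 * a1 - 2 * a0 * a2) :: complex) = of_rat (3 * of_nat m + 5)" using E(3) by simp
      then show ?thesis unfolding A0_def A1_def A2_def by (simp add: of_rat_diff of_rat_mult of_rat_add)
    qed
    have "\<theta>^6 - (of_nat m + 5) * \<theta>^4 + (3 * of_nat m + 5) * \<theta>^2 - 1
        = \<theta>^6 + (2 * A1 - A2 * A2) * \<theta>^4 + (A1 * A1 - 2 * A0 * A2) * \<theta>^2 - A0 * A0"
      unfolding R0 R1 R2 by (simp add: algebra_simps)
    also have "\<dots> = - ((A0 + A1 * \<theta> + A2 * \<theta>^2 + \<theta>^3) * (A0 - A1 * \<theta> + A2 * \<theta>^2 - \<theta>^3))"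
      by (simp add: algebra_simps power2_eq_square power3_eq_cube eval_nat_numeral)
    also have "\<dots> = 0" using F by simp
    finally show ?thesis unfolding qeq_def .
  qed
  assume "\<exists>k::int. \<theta>1 + \<theta>2 + \<theta>3 = of_int (2 * k + 1)"
  then obtain k :: int where hs: "\<theta>1 + \<theta>2 + \<theta>3 = of_int (2 * k + 1)" by blast
  show "\<forall>a\<in>{vc, vd, ve, vf}. \<forall>b. \<not> pgst (T2_size m) (T2_edge m) a b"
  proof (intro ballI allI)
    fix a b assume "a \<in> {vc, vd, ve, vf}"
    then have a: "a \<in> {3,4,1,2}" by (auto simp: vc_def vd_def ve_def vf_def)
    show "\<not> pgst (T2_size m) (T2_edge m) a b"
      by (rule no_pgst_odd[OF m qeqs qeqs qeqs hs a]) auto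
  qed
qed

lemma qeq_of_real:
  "qeq m (complex_of_real x) \<longleftrightarrow> x^6 - (real m + 5) * x^4 + (3 * real m + 5) * x^2 - 1 = 0"
proof -
  have "complex_of_real (x^6 - (real m + 5) * x^4 + (3 * real m + 5) * x^2 - 1)
     = (complex_of_real x)^6 - (of_nat m + 5) * (complex_of_real x)^4 + (3 * of_nat m + 5) * (complex_of_real x)^2 - 1"
    by simp
  then show ?thesis unfolding qeq_def by (metis of_real_eq_0_iff)
qed

lemma Nn_of_real:
  assumes m: "m > 0"
  shows "Nn m (complex_of_real x) = complex_of_real (2 + 2 * x^2 + (x^2 - 1)^2 + (x^3 - 3*x)^2
     + real m * (x * (x^3 - 3*x) / (x^2 - 1))^2 + real m * ((x^3 - 3*x) / (x^2 - 1))^2)"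
  using m by (simp add: Nn_def inner_def Wv_def power2_eq_square mult.assoc)

lemma Nn_nz:
  assumes m: "m > 0"
  shows "Nn m (complex_of_real x) \<noteq> 0"
proof -
  have "2 + 2 * x^2 + (x^2 - 1)^2 + (x^3 - 3*x)^2
     + real m * (x * (x^3 - 3*x) / (x^2 - 1))^2 + real m * ((x^3 - 3*x) / (x^2 - 1))^2 > 0"
    by (intro add_pos_nonneg mult_nonneg_nonneg) auto
  then show ?thesis unfolding Nn_of_real[OF m] by (simp del: of_real_add)
qed

lemma irreducible_part:
  assumes m: "m > 0" and irr: "irreducible (q_poly m)"
  shows "pgst_wrt (T2_size m) (T2_edge m) odd_pi_multiples vc vd \<and>
         pgst_wrt (T2_size m) (T2_edge m) odd_pi_multiples ve vf"
proof -
  obtain y1 y2 y3 where y: "0 < y1" "y1 < 1" "1 < y2" "y2 < 3" "3 < y3"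
    and py: "pp m y1 = 0" "pp m y2 = 0" "pp m y3 = 0"
    using pp_roots[OF m] by blast
  note V = vieta3[OF py] 
  have V1: "y1 + y2 + y3 = real m + 5" and V3: "y1 * y2 * y3 = 1" using V y by auto
  define \<theta>1 where "\<theta>1 = sqrt y1"
  define \<theta>2 where "\<theta>2 = sqrt y2"
  define \<theta>3 where "\<theta>3 = sqrt y3"
  have sq: "\<theta>1^2 = y1" "\<theta>2^2 = y2" "\<theta>3^2 = y3" using y unfolding \<theta>1_def \<theta>2_def \<theta>3_def by auto
  have pos: "\<theta>1 > 0" "\<theta>2 > 0" "\<theta>3 > 0" using y unfolding \<theta>1_def \<theta>2_def \<theta>3_def by auto
  have pr: "\<theta>1 * \<theta>2 * \<theta>3 = 1" unfolding \<theta>1_def \<theta>2_def \<theta>3_def using V3 by (simp add: real_sqrt_mult[symmetric])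
  have qr: "x^6 - (real m + 5) * x^4 + (3 * real m + 5) * x^2 - 1 = 0" if "x^2 = y1 \<or> x^2 = y2 \<or> x^2 = y3" for x
  proof -
    have "x^6 = (x^2)^3" "x^4 = (x^2)^2" by (simp_all add: power_mult[symmetric])
    then have "x^6 - (real m + 5) * x^4 + (3 * real m + 5) * x^2 - 1 = pp m (x^2)" by (simp add: pp_def)
    then show ?thesis using that py by auto
  qed
  have s23: "\<theta>2^2 + \<theta>3^2 = real m + 5 - \<theta>1^2" using V1 sq by simp
  have ind: "l1 = 0 \<and> l2 = 0 \<and> l3 = 0 \<and> n = 0"
    if "of_int l1 * \<theta>1 + of_int l2 * \<theta>2 + of_int l3 * \<theta>3 = of_int n" for l1 l2 l3 n :: int
    by (rule indep3[OF irr qr s23 pr that]) (use sq in simp)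
  have ne: "\<theta>1 \<noteq> \<theta>2" "\<theta>1 \<noteq> \<theta>3" "\<theta>2 \<noteq> \<theta>3" "\<theta>1 \<noteq> 1" "\<theta>2 \<noteq> 1" "\<theta>3 \<noteq> 1"
    using sq y by (metis less_irrefl power_one order.strict_trans)+
  obtain \<tau> where odd: "\<And>k. \<tau> k \<in> odd_pi_multiples"
    and conv0: "\<And>x. x \<in> {\<theta>1, \<theta>2, \<theta>3} \<Longrightarrow> (\<lambda>k. exp (\<i> * complex_of_real (\<tau> k) * complex_of_real x)) \<longlonglongrightarrow> 1"
    using kron_seq[OF ind ne] by blast
  define Rr where "Rr = {\<theta>1, \<theta>2, \<theta>3, -\<theta>1, -\<theta>2, -\<theta>3}"
  define R where "R = complex_of_real ` Rr"
  have finR: "finite R" unfolding R_def Rr_def by simp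
  have cRr: "card Rr = 6" unfolding Rr_def using ne pos by (simp add: card_insert_if)
  have cR: "card R = 6" unfolding R_def using cRr by (simp add: card_image inj_on_def)
  have Rprop: "qeq m \<mu> \<and> \<mu>^2 \<noteq> 1 \<and> Nn m \<mu> \<noteq> 0" if \<mu>R: "\<mu> \<in> R" for \<mu>
  proof -
    obtain x where x: "x \<in> Rr" "\<mu> = complex_of_real x" using \<mu>R unfolding R_def by blast
    have "x^2 = y1 \<or> x^2 = y2 \<or> x^2 = y3" using x(1) sq unfolding Rr_def by auto
    then have q: "qeq m \<mu>" unfolding x(2) qeq_of_real by (rule qr)
    show ?thesis using q qeq_sq[OF m q] Nn_nz[OF m] x(2) by simp
  qed
  interpret rootsR m R using m finR cR Rprop by unfold_locales auto
  have conv: "(\<lambda>k. exp (\<i> * complex_of_real (\<tau> k) * \<mu>)) \<longlonglongrightarrow> 1" if \<mu>R: "\<mu> \<in> R" for \<mu>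
  proof -
    obtain x where x: "x \<in> Rr" "\<mu> = complex_of_real x" using \<mu>R unfolding R_def by blast
    consider "x \<in> {\<theta>1, \<theta>2, \<theta>3}" | "-x \<in> {\<theta>1, \<theta>2, \<theta>3}" using x(1) unfolding Rr_def by auto
    then show ?thesis
    proof cases
      case 1 then show ?thesis using conv0 x(2) by simp
    next
      case 2
      have "(\<lambda>k. inverse (exp (\<i> * complex_of_real (\<tau> k) * complex_of_real (-x)))) \<longlonglongrightarrow> inverse 1"
        by (intro tendsto_inverse conv0[OF 2]) simp
      moreover have "inverse (exp (\<i> * complex_of_real (\<tau> k) * complex_of_real (-x))) = exp (\<i> * complex_of_real (\<tau> k) * \<mu>)" for k
        unfolding x(2) by (simp add: exp_minus[symmetric])
      ultimately show ?thesis by simp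
    qed
  qed
  show ?thesis using pgst_pos[OF odd conv] by (simp add: vc_def vd_def ve_def vf_def)
qed

theorem theorem3p3:
  fixes m :: nat
  assumes "m > 0"
  shows
   "(irreducible (q_poly m) \<longrightarrow>
       pgst_wrt (T2_size m) (T2_edge m) odd_pi_multiples vc vd \<and>
       pgst_wrt (T2_size m) (T2_edge m) odd_pi_multiples ve vf)
    \<and>
    (\<forall>(f :: rat poly) (\<theta>1::complex) \<theta>2 \<theta>3.
       \<not> irreducible (q_poly m) \<and> irreducible f \<and> lead_coeff f = 1 \<and> degree f = 3 \<and>
       q_poly m = - (f * pcompose f [:0, -1:]) \<and>
       map_poly of_rat f = [:-\<theta>1, 1:] * [:-\<theta>2, 1:] * [:-\<theta>3, 1:] \<longrightarrow>
         ((\<exists>k::int. \<theta>1 + \<theta>2 + \<theta>3 = of_int (2 * k)) \<longrightarrow>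
            pgst_wrt (T2_size m) (T2_edge m) odd_pi_multiples vc vd \<and>
            pgst_wrt (T2_size m) (T2_edge m) odd_pi_multiples ve vf) \<and>
         ((\<exists>k::int. \<theta>1 + \<theta>2 + \<theta>3 = of_int (2 * k + 1)) \<longrightarrow>
            (\<forall>a\<in>{vc, vd, ve, vf}. \<forall>b. \<not> pgst (T2_size m) (T2_edge m) a b)))"
proof (rule conjI)
  show "irreducible (q_poly m) \<longrightarrow>
       pgst_wrt (T2_size m) (T2_edge m) odd_pi_multiples vc vd \<and>
       pgst_wrt (T2_size m) (T2_edge m) odd_pi_multiples ve vf"
    using irreducible_part[OF assms] by blast
next
  show "\<forall>(f :: rat poly) (\<theta>1::complex) \<theta>2 \<theta>3.
       \<not> irreducible (q_poly m) \<and> irreducible f \<and> lead_coeff f = 1 \<and> degree f = 3 \<and>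
       q_poly m = - (f * pcompose f [:0, -1:]) \<and>
       map_poly of_rat f = [:-\<theta>1, 1:] * [:-\<theta>2, 1:] * [:-\<theta>3, 1:] \<longrightarrow>
         ((\<exists>k::int. \<theta>1 + \<theta>2 + \<theta>3 = of_int (2 * k)) \<longrightarrow>
            pgst_wrt (T2_size m) (T2_edge m) odd_pi_multiples vc vd \<and>
            pgst_wrt (T2_size m) (T2_edge m) odd_pi_multiples ve vf) \<and>
         ((\<exists>k::int. \<theta>1 + \<theta>2 + \<theta>3 = of_int (2 * k + 1)) \<longrightarrow>
            (\<forall>a\<in>{vc, vd, ve, vf}. \<forall>b. \<not> pgst (T2_size m) (T2_edge m) a b))"
  proof (intro allI impI)
    fix f :: "rat poly" and \<theta>1 \<theta>2 \<theta>3 :: complex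
    assume H: "\<not> irreducible (q_poly m) \<and> irreducible f \<and> lead_coeff f = 1 \<and> degree f = 3 \<and>
       q_poly m = - (f * pcompose f [:0, -1:]) \<and>
       map_poly of_rat f = [:-\<theta>1, 1:] * [:-\<theta>2, 1:] * [:-\<theta>3, 1:]"
    then have lc: "lead_coeff f = 1" and d3: "degree f = 3" and qf: "q_poly m = - (f * pcompose f [:0, -1:])"
      and ff: "map_poly of_rat f = [:-\<theta>1, 1:] * [:-\<theta>2, 1:] * [:-\<theta>3, 1:]" by blast+
    note RP = reducible_part[OF assms lc d3 qf ff]
    show "((\<exists>k::int. \<theta>1 + \<theta>2 + \<theta>3 = of_int (2 * k)) \<longrightarrow>
            pgst_wrt (T2_size m) (T2_edge m) odd_pi_multiples vc vd \<and>
            pgst_wrt (T2_size m) (T2_edge m) odd_pi_multiples ve vf) \<and>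
         ((\<exists>k::int. \<theta>1 + \<theta>2 + \<theta>3 = of_int (2 * k + 1)) \<longrightarrow>
            (\<forall>a\<in>{vc, vd, ve, vf}. \<forall>b. \<not> pgst (T2_size m) (T2_edge m) a b))"
      using RP by blast
  qed
qed

end
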